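(* In the setting below, $p_-+p_+\ge1$. Moreover, $p_-+p_+=1$ if and only if $\mathbb{P}(Z=0)=0$, where $Z=\sup_{0\le t\le1}(\bar W^-_t+f(-t))+\inf_{0\le t\le1}(\bar W^+_t-f(t))$ for two independent Brownian motions $\bar W^-,\bar W^+$ on $[0,1]$ with $\bar W^-_0=\bar W^+_0=0$.
   Context: All Brownian motions have a common variance $\sigma^2>0$ per unit time. Let $f:[-1,1]\to\mathbb{R}$ be continuous with $f(0)=0$ (the "barrier"). Let $W^-$ be a Brownian motion on $[-1,1]$ and define $\tilde W^-_t=\sup_{-1\le s\le t}(f(s)+W^-_t-W^-_s)$ for $t\in[-1,0]$ (Brownian motion started at $f(-1)$ reflected above $f$); on $[0,1]$, $\tilde W^-_t=\tilde W^-_0+W^-_t-W^-_0$ for $t\le\sigma_-\wedge1$ where $\sigma_-=\inf\{t\ge0:\tilde W^-_t=f(t)\}$, and $\tilde W^-_t=f(t)$ for $t\ge\sigma_-$ (absorption). Let $p_-=\mathbb{P}(\sigma_-<1)$. Symmetrically, with a Brownian motion $W^+$ on $[-1,1]$, let $\tilde W^+_t=\sup_{t\le s\le1}(f(s)+W^+_t-W^+_s)$ for $t\in[0,1]$ (started at $f(1)$ at time $1$, reflected above $f$ backwards in time), and on $[-1,0]$, $\tilde W^+_t=\tilde W^+_0+W^+_t-W^+_0$ for $t\ge\sigma_+$ where $\sigma_+=\sup\{t\le0:\tilde W^+_t=f(t)\}$, absorbed into $f$ before $\sigma_+$. Let $p_+=\mathbb{P}(\sigma_+>-1)$. *)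

theory Defs
  imports "HOL-Probability.Probability"
begin

text \<open>No condition on the initial value is imposed.\<close>
definition BM_on :: "'a measure \<Rightarrow> real \<Rightarrow> real \<Rightarrow> real \<Rightarrow> ('a \<Rightarrow> real \<Rightarrow> real) \<Rightarrow> bool" where
  "BM_on M s a b W \<longleftrightarrow> prob_space M \<and> a < b \<and>
     (\<forall>t\<in>{a..b}. (\<lambda>\<omega>. W \<omega> t) \<in> borel_measurable M) \<and>
     (\<forall>\<omega>\<in>space M. continuous_on {a..b} (W \<omega>)) \<and>
     (\<forall>ts::real list. sorted_wrt (<) ts \<and> set ts \<subseteq> {a..b} \<longrightarrow>
        prob_space.indep_vars M (\<lambda>_. borel)
           (\<lambda>i \<omega>. W \<omega> (ts ! Suc i) - W \<omega> (ts ! i)) {..<length ts - 1} \<and>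
        (\<forall>i < length ts - 1. distributed M lborel
           (\<lambda>\<omega>. W \<omega> (ts ! Suc i) - W \<omega> (ts ! i))
           (\<lambda>x. ennreal (normal_density 0 (s * sqrt (ts ! Suc i - ts ! i)) x))))"

text \<open>The "minus" construction: reflection above f on [-1,0], started at f(-1).\<close>
definition refl_minus :: "(real \<Rightarrow> real) \<Rightarrow> (real \<Rightarrow> real) \<Rightarrow> real \<Rightarrow> real" where
  "refl_minus f W t = Sup ((\<lambda>s. f s + W t - W s) ` {-1..t})"

text \<open>On [0,1], before absorption, the process moves freely like W.\<close>
definition free_minus :: "(real \<Rightarrow> real) \<Rightarrow> (real \<Rightarrow> real) \<Rightarrow> real \<Rightarrow> real" where
  "free_minus f W t = refl_minus f W 0 + W t - W 0"

text \<open>sigma_- = inf {t in [0,1] : process hits f}, with inf of the empty set = +infinity.\<close>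
definition sigma_minus :: "(real \<Rightarrow> real) \<Rightarrow> (real \<Rightarrow> real) \<Rightarrow> ereal" where
  "sigma_minus f W = Inf (ereal ` {t \<in> {0..1}. free_minus f W t = f t})"

definition p_minus :: "'a measure \<Rightarrow> (real \<Rightarrow> real) \<Rightarrow> ('a \<Rightarrow> real \<Rightarrow> real) \<Rightarrow> real" where
  "p_minus M f W = measure M {\<omega> \<in> space M. sigma_minus f (W \<omega>) < 1}"

text \<open>The "plus" construction: reflection above f backwards in time on [0,1], started at f(1) at time 1.\<close>
definition refl_plus :: "(real \<Rightarrow> real) \<Rightarrow> (real \<Rightarrow> real) \<Rightarrow> real \<Rightarrow> real" where
  "refl_plus f W t = Sup ((\<lambda>s. f s + W t - W s) ` {t..1})"

definition free_plus :: "(real \<Rightarrow> real) \<Rightarrow> (real \<Rightarrow> real) \<Rightarrow> real \<Rightarrow> real" where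
  "free_plus f W t = refl_plus f W 0 + W t - W 0"

text \<open>sigma_+ = sup {t in [-1,0] : process hits f}, with sup of the empty set = -infinity.\<close>
definition sigma_plus :: "(real \<Rightarrow> real) \<Rightarrow> (real \<Rightarrow> real) \<Rightarrow> ereal" where
  "sigma_plus f W = Sup (ereal ` {t \<in> {-1..0}. free_plus f W t = f t})"

definition p_plus :: "'a measure \<Rightarrow> (real \<Rightarrow> real) \<Rightarrow> ('a \<Rightarrow> real \<Rightarrow> real) \<Rightarrow> real" where
  "p_plus M f W = measure M {\<omega> \<in> space M. sigma_plus f (W \<omega>) > -1}"

definition Zval :: "(real \<Rightarrow> real) \<Rightarrow> (real \<Rightarrow> real) \<Rightarrow> (real \<Rightarrow> real) \<Rightarrow> real" where
  "Zval f B1 B2 = Sup ((\<lambda>t. B1 t + f (-t)) ` {0..1}) + Inf ((\<lambda>t. B2 t - f t) ` {0..1})"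

end

theory Submission
  imports Defs
begin


definition Qs :: "real \<Rightarrow> real \<Rightarrow> real set" where
  "Qs a b = {q. q \<in> \<rat> \<and> a \<le> q \<and> q \<le> b}"

lemma Inf_ereal_less1: "Inf (ereal ` S) < 1 \<longleftrightarrow> (\<exists>t\<in>S. t < 1)"
  by (simp add: Inf_less_iff)

lemma Sup_ereal_gtm1: "- 1 < Sup (ereal ` S) \<longleftrightarrow> (\<exists>t\<in>S. - 1 < t)"
proof -
  have m: "(- 1::ereal) = ereal (- 1)" by (simp add: one_ereal_def)
  have "(- 1 < ereal t) = (- 1 < t)" for t unfolding m by simp
  then show ?thesis by (simp add: less_Sup_iff)
qed

lemma Qs_sub: "Qs a b \<subseteq> {a..b}" by (auto simp: Qs_def)

lemma countable_Qs: "countable (Qs a b)"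
  by (rule countable_subset[OF _ countable_rat]) (auto simp: Qs_def)

lemma sup_rat:
  fixes g :: "real \<Rightarrow> real"
  assumes ab: "a \<le> b" "a \<in> \<rat>" "b \<in> \<rat>" and g: "continuous_on {a..b} g"
  shows "(SUP q\<in>Qs a b. ereal (g q)) = ereal (Sup (g ` {a..b}))"
proof -
  have cpt: "compact (g ` {a..b})" by (rule compact_continuous_image[OF g]) simp
  have bdd: "bdd_above (g ` {a..b})" using cpt by (simp add: compact_imp_bounded bounded_imp_bdd_above)
  obtain t0 where t0: "t0 \<in> {a..b}" "\<forall>y\<in>{a..b}. g y \<le> g t0"
    using continuous_attains_sup[OF compact_Icc _ g] ab by auto
  have S: "Sup (g ` {a..b}) = g t0"
    using t0 by (intro antisym cSup_least cSup_upper bdd) auto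
  have aQ: "a \<in> Qs a b" using ab by (simp add: Qs_def)
  have le: "(SUP q\<in>Qs a b. ereal (g q)) \<le> ereal (g t0)"
    using t0 Qs_sub by (intro SUP_least) auto
  have ge: "ereal (g t0) \<le> (SUP q\<in>Qs a b. ereal (g q))"
  proof (rule ccontr)
    assume "\<not> ?thesis"
    then have lt: "(SUP q\<in>Qs a b. ereal (g q)) < ereal (g t0)" by simp
    have lo: "ereal (g a) \<le> (SUP q\<in>Qs a b. ereal (g q))" using aQ by (rule SUP_upper)
    obtain r where r: "(SUP q\<in>Qs a b. ereal (g q)) = ereal r"
      using lt lo by (cases "(SUP q\<in>Qs a b. ereal (g q))") auto
    have rlt: "r < g t0" using lt r by simp
    have up: "\<And>q. q \<in> Qs a b \<Longrightarrow> g q \<le> r"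
    proof -
      fix q assume "q \<in> Qs a b"
      then have "ereal (g q) \<le> ereal r" using r by (metis SUP_upper)
      then show "g q \<le> r" by simp
    qed
    obtain d where d: "d > 0" "\<forall>x\<in>{a..b}. dist x t0 < d \<longrightarrow> dist (g x) (g t0) < g t0 - r"
      using g t0(1) rlt unfolding continuous_on_iff by (metis diff_gt_0_iff_gt)
    obtain q where q: "q \<in> Qs a b" "dist q t0 < d"
    proof (cases "t0 < b")
      case True
      obtain q where "q \<in> \<rat>" "t0 < q" "q < min (t0 + d) b"
        using Rats_dense_in_real[of t0 "min (t0+d) b"] True d by auto
      then show ?thesis using that[of q] t0 by (auto simp: Qs_def dist_real_def)
    next
      case False
      then have "t0 = b" using t0 by auto
      then show ?thesis using that[of b] ab d by (auto simp: Qs_def)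
    qed
    then have "dist (g q) (g t0) < g t0 - r" using d Qs_sub by auto
    then have "g q > r" by (auto simp: dist_real_def)
    with up[OF q(1)] show False by simp
  qed
  show ?thesis using le ge S by simp
qed


definition kk :: "(real\<Rightarrow>real) \<Rightarrow> (real\<Rightarrow>real) \<Rightarrow> real \<Rightarrow> real" where
  "kk f w u = f u - (w u - w 0)"

context
  fixes f w :: "real \<Rightarrow> real"
  assumes fc: "continuous_on {-1..1} f" and wc: "continuous_on {-1..1} w" and f0: "f 0 = 0"
begin

lemma kk_cont: "S \<subseteq> {-1..1} \<Longrightarrow> continuous_on S (kk f w)"
  unfolding kk_def
  by (intro continuous_intros continuous_on_subset[OF fc] continuous_on_subset[OF wc]) auto

lemma kk0: "kk f w 0 = 0" by (simp add: kk_def f0)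

lemma kk_bdd: "-1 \<le> a \<Longrightarrow> b \<le> 1 \<Longrightarrow> bdd_above (kk f w ` {a..b})"
  by (intro compact_imp_bounded[THEN bounded_imp_bdd_above] compact_continuous_image kk_cont) auto

lemma kk_attain: assumes "-1 \<le> a" "a \<le> b" "b \<le> 1"
  shows "\<exists>u\<in>{a..b}. kk f w u = Sup (kk f w ` {a..b}) \<and> (\<forall>v\<in>{a..b}. kk f w v \<le> kk f w u)"
proof -
  obtain t0 where t0: "t0 \<in> {a..b}" "\<forall>y\<in>{a..b}. kk f w y \<le> kk f w t0"
    using continuous_attains_sup[OF compact_Icc _ kk_cont[of "{a..b}"]] assms by auto
  have "Sup (kk f w ` {a..b}) = kk f w t0"
    using t0 kk_bdd[of a b] assms by (intro antisym cSup_least cSup_upper) auto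
  then show ?thesis using t0 by auto
qed

lemma kk_le_Sup: "-1 \<le> a \<Longrightarrow> b \<le> 1 \<Longrightarrow> u \<in> {a..b} \<Longrightarrow> kk f w u \<le> Sup (kk f w ` {a..b})"
  using kk_bdd by (intro cSup_upper) auto

abbreviation "KK \<equiv> Sup (kk f w ` {-1..0})"
abbreviation "HH \<equiv> Sup (kk f w ` {0..1})"

lemma KK_nonneg: "0 \<le> KK" using kk_le_Sup[of "-1" 0 0] kk0 by simp
lemma HH_nonneg: "0 \<le> HH" using kk_le_Sup[of 0 1 0] kk0 by simp

lemma refl_minus0: "refl_minus f w 0 = KK"
  unfolding refl_minus_def kk_def by (intro arg_cong[where f=Sup] image_cong) auto

lemma refl_plus0: "refl_plus f w 0 = HH"
  unfolding refl_plus_def kk_def by (intro arg_cong[where f=Sup] image_cong) auto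

lemma sigma_minus_iff: "sigma_minus f w < 1 \<longleftrightarrow> (\<exists>t\<in>{0..<1}. KK \<le> kk f w t)"
proof -
  have e: "free_minus f w t = f t \<longleftrightarrow> kk f w t = KK" for t
    unfolding free_minus_def refl_minus0 kk_def by auto
  have "sigma_minus f w < 1 \<longleftrightarrow> (\<exists>t\<in>{t\<in>{0..1}. free_minus f w t = f t}. t < 1)"
    unfolding sigma_minus_def by (rule Inf_ereal_less1)
  also have "\<dots> \<longleftrightarrow> (\<exists>t\<in>{0..<1}. kk f w t = KK)" using e by auto
  also have "\<dots> \<longleftrightarrow> (\<exists>t\<in>{0..<1}. KK \<le> kk f w t)"
  proof
    assume "\<exists>t\<in>{0..<1}. KK \<le> kk f w t"
    then obtain t where t: "t \<in> {0..<1}" "KK \<le> kk f w t" by auto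
    have "\<exists>x. 0 \<le> x \<and> x \<le> t \<and> kk f w x = KK"
      using t KK_nonneg kk0 by (intro IVT' kk_cont) auto
    then obtain x where "0 \<le> x" "x \<le> t" "kk f w x = KK" by blast
    then show "\<exists>t\<in>{0..<1}. kk f w t = KK" using t by (intro bexI[of _ x]) auto
  next
    assume "\<exists>t\<in>{0..<1}. kk f w t = KK"
    then show "\<exists>t\<in>{0..<1}. KK \<le> kk f w t" by (metis order_refl)
  qed
  finally show ?thesis .
qed

lemma sigma_plus_iff: "sigma_plus f w > -1 \<longleftrightarrow> (\<exists>t\<in>{-1<..0}. HH \<le> kk f w t)"
proof -
  have e: "free_plus f w t = f t \<longleftrightarrow> kk f w t = HH" for t
    unfolding free_plus_def refl_plus0 kk_def by auto
  have "sigma_plus f w > -1 \<longleftrightarrow> (\<exists>t\<in>{t\<in>{-1..0}. free_plus f w t = f t}. -1 < t)"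
    unfolding sigma_plus_def by (rule Sup_ereal_gtm1)
  also have "\<dots> \<longleftrightarrow> (\<exists>t\<in>{-1<..0}. kk f w t = HH)" using e by auto (meson less_eq_real_def)
  also have "\<dots> \<longleftrightarrow> (\<exists>t\<in>{-1<..0}. HH \<le> kk f w t)"
  proof
    assume "\<exists>t\<in>{-1<..0}. HH \<le> kk f w t"
    then obtain t where t: "t \<in> {-1<..0}" "HH \<le> kk f w t" by auto
    have "\<exists>x. t \<le> x \<and> x \<le> 0 \<and> kk f w x = HH"
      using t HH_nonneg kk0 by (intro IVT2' kk_cont) auto
    then obtain x where "t \<le> x" "x \<le> 0" "kk f w x = HH" by blast
    then show "\<exists>t\<in>{-1<..0}. kk f w t = HH" using t by (intro bexI[of _ x]) auto
  next
    assume "\<exists>t\<in>{-1<..0}. kk f w t = HH"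
    then show "\<exists>t\<in>{-1<..0}. HH \<le> kk f w t" by (metis order_refl)
  qed
  finally show ?thesis .
qed

lemma Cm_iff: "(\<exists>t\<in>{0..<1}. KK \<le> kk f w t) \<longleftrightarrow> (\<exists>n::nat. KK \<le> Sup (kk f w ` {0..1 - 1/Suc n}))"
proof
  assume "\<exists>t\<in>{0..<1}. KK \<le> kk f w t"
  then obtain t where t: "0 \<le> t" "t < 1" "KK \<le> kk f w t" by auto
  obtain n where n: "inverse (real (Suc n)) < 1 - t" using reals_Archimedean[of "1 - t"] t by auto
  have "t \<le> 1 - 1/Suc n" using n by (simp add: field_simps)
  then have "kk f w t \<le> Sup (kk f w ` {0..1 - 1/Suc n})" using t by (intro kk_le_Sup) auto
  then show "\<exists>n::nat. KK \<le> Sup (kk f w ` {0..1 - 1/Suc n})" using t(3) by (meson order_trans)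
next
  assume "\<exists>n::nat. KK \<le> Sup (kk f w ` {0..1 - 1/Suc n})"
  then obtain n::nat where n: "KK \<le> Sup (kk f w ` {0..1 - 1/Suc n})" by auto
  have le: "0 \<le> 1 - 1/real (Suc n)" by (simp add: field_simps)
  obtain u where u: "u \<in> {0..1 - 1/Suc n}" "kk f w u = Sup (kk f w ` {0..1 - 1/Suc n})"
    using kk_attain[of 0 "1 - 1/Suc n"] le by auto
  have "0 < 1/real (Suc n)" by simp
  then have "u < 1" using u(1) unfolding atLeastAtMost_iff by linarith
  then show "\<exists>t\<in>{0..<1}. KK \<le> kk f w t" using u n by (intro bexI[of _ u]) auto
qed

lemma Cp_iff: "(\<exists>t\<in>{-1<..0}. HH \<le> kk f w t) \<longleftrightarrow> (\<exists>n::nat. HH \<le> Sup (kk f w ` {-1 + 1/Suc n..0}))"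
proof
  assume "\<exists>t\<in>{-1<..0}. HH \<le> kk f w t"
  then obtain t where t: "-1 < t" "t \<le> 0" "HH \<le> kk f w t" by auto
  obtain n where n: "inverse (real (Suc n)) < 1 + t" using reals_Archimedean[of "1 + t"] t by auto
  have "-1 + 1/Suc n \<le> t" using n by (simp add: field_simps)
  then have "kk f w t \<le> Sup (kk f w ` {-1 + 1/Suc n..0})" using t
    by (intro kk_le_Sup) (auto simp: field_simps)
  then show "\<exists>n::nat. HH \<le> Sup (kk f w ` {-1 + 1/Suc n..0})" using t(3) by (meson order_trans)
next
  assume "\<exists>n::nat. HH \<le> Sup (kk f w ` {-1 + 1/Suc n..0})"
  then obtain n::nat where n: "HH \<le> Sup (kk f w ` {-1 + 1/Suc n..0})" by auto
  have le: "-1 + 1/real (Suc n) \<le> 0" "-1 \<le> -1 + 1/real (Suc n)" by (simp_all add: field_simps)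
  obtain u where u: "u \<in> {-1 + 1/Suc n..0}" "kk f w u = Sup (kk f w ` {-1 + 1/Suc n..0})"
    using kk_attain[of "-1 + 1/Suc n" 0] le by auto
  have "0 < 1/real (Suc n)" by simp
  then have "-1 < u" using u(1) unfolding atLeastAtMost_iff by linarith
  then show "\<exists>t\<in>{-1<..0}. HH \<le> kk f w t" using u n by (intro bexI[of _ u]) auto
qed

abbreviation "Cm \<equiv> (\<exists>t\<in>{0..<1}. KK \<le> kk f w t)"
abbreviation "Cp \<equiv> (\<exists>t\<in>{-1<..0}. HH \<le> kk f w t)"

lemma HH_lt_KK: assumes "HH < KK" shows Cp
proof -
  obtain u where u: "u \<in> {-1..0}" "kk f w u = KK" using kk_attain[of "-1" 0] by auto
  show ?thesis
  proof (cases "u = -1")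
    case False then show ?thesis using u assms by (intro bexI[of _ u]) auto
  next
    case True
    obtain d where d: "d > 0" "\<forall>x\<in>{-1..0}. dist x (-1) < d \<longrightarrow> dist (kk f w x) (kk f w (-1)) < KK - HH"
    proof -
      have c: "continuous_on {-1..0} (kk f w)" by (rule kk_cont) auto
      have "-1 \<in> {-1..(0::real)}" "KK - HH > 0" using assms by auto
      then show ?thesis using c unfolding continuous_on_iff using that by blast
    qed
    define x where "x = -1 + min (d/2) 1"
    have x: "x \<in> {-1<..0}" "dist x (-1) < d" using d by (auto simp: x_def dist_real_def)
    then have "dist (kk f w x) (kk f w (-1)) < KK - HH" using d by auto
    then have "HH \<le> kk f w x" using True u by (auto simp: dist_real_def)
    then show ?thesis using x by auto
  qed
qed

lemma KK_lt_HH: assumes "KK < HH" shows Cm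
proof -
  obtain u where u: "u \<in> {0..1}" "kk f w u = HH" using kk_attain[of 0 1] by auto
  show ?thesis
  proof (cases "u = 1")
    case False then show ?thesis using u assms by (intro bexI[of _ u]) auto
  next
    case True
    obtain d where d: "d > 0" "\<forall>x\<in>{0..1}. dist x 1 < d \<longrightarrow> dist (kk f w x) (kk f w 1) < HH - KK"
    proof -
      have c: "continuous_on {0..1} (kk f w)" by (rule kk_cont) auto
      have "1 \<in> {0..(1::real)}" "HH - KK > 0" using assms by auto
      then show ?thesis using c unfolding continuous_on_iff using that by blast
    qed
    define x where "x = 1 - min (d/2) 1"
    have x: "x \<in> {0..<1}" "dist x 1 < d" using d by (auto simp: x_def dist_real_def)
    then have "dist (kk f w x) (kk f w 1) < HH - KK" using d by auto
    then have "KK \<le> kk f w x" using True u by (auto simp: dist_real_def)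
    then show ?thesis using x by auto
  qed
qed

lemma R2: "Cm \<Longrightarrow> Cp \<Longrightarrow> KK = HH"
proof -
  assume "Cm" "Cp"
  then obtain t u where t: "t \<in> {0..<1}" "KK \<le> kk f w t" and u: "u \<in> {-1<..0}" "HH \<le> kk f w u" by auto
  have "kk f w t \<le> HH" using t by (intro kk_le_Sup) auto
  moreover have "kk f w u \<le> KK" using u by (intro kk_le_Sup) auto
  ultimately show ?thesis using t u by linarith
qed

lemma R1: "\<not> Cm \<Longrightarrow> \<not> Cp \<Longrightarrow> KK = kk f w 1"
proof -
  assume a: "\<not> Cm" "\<not> Cp"
  then have eq: "KK = HH" using HH_lt_KK KK_lt_HH by (meson linorder_neqE_linordered_idom)
  obtain u where u: "u \<in> {0..1}" "kk f w u = HH" using kk_attain[of 0 1] by auto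
  have "u = 1" using a(1) u eq by (metis atLeastAtMost_iff atLeastLessThan_iff order_refl order_less_le)
  then show ?thesis using u eq by simp
qed

lemma R3: "KK = HH \<Longrightarrow> \<not> (Cm \<and> Cp) \<Longrightarrow> KK = kk f w 1 \<or> HH = kk f w (-1)"
proof -
  assume eq: "KK = HH" and n: "\<not> (Cm \<and> Cp)"
  show ?thesis
  proof (cases Cm)
    case False
    obtain u where u: "u \<in> {0..1}" "kk f w u = HH" using kk_attain[of 0 1] by auto
    have "u = 1" using False u eq by (metis atLeastAtMost_iff atLeastLessThan_iff order_refl order_less_le)
    then show ?thesis using u eq by simp
  next
    case True
    then have "\<not> Cp" using n by blast
    obtain u where u: "u \<in> {-1..0}" "kk f w u = KK" using kk_attain[of "-1" 0] by auto
    have "u = -1" using \<open>\<not> Cp\<close> u eq by (metis atLeastAtMost_iff greaterThanAtMost_iff order_refl order_less_le)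
    then show ?thesis using u eq by simp
  qed
qed

end


definition DD :: "real set" where "DD = Qs (-1) 1"
definition PS :: "(real \<Rightarrow> real) measure" where "PS = PiM DD (\<lambda>_. borel)"

definition SE :: "(real\<Rightarrow>real) \<Rightarrow> real \<Rightarrow> real \<Rightarrow> (real \<Rightarrow> real) \<Rightarrow> ereal" where
  "SE f a b x = (SUP q\<in>Qs a b. ereal (kk f x q))"

definition "Gm f = {x\<in>space PS. \<exists>n::nat. SE f (-1) 0 x \<le> SE f 0 (1 - 1/Suc n) x}"
definition "Gp f = {x\<in>space PS. \<exists>n::nat. SE f 0 1 x \<le> SE f (-1 + 1/Suc n) 0 x}"
definition "N1 f = {x\<in>space PS. SE f (-1) 0 x = ereal (kk f x 1)}"
definition "N2 f = {x\<in>space PS. SE f 0 1 x = ereal (kk f x (-1))}"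
definition "TT f = {x\<in>space PS. SE f (-1) 0 x = SE f 0 1 x}"

lemma DD_mem: "q \<in> \<rat> \<Longrightarrow> -1 \<le> q \<Longrightarrow> q \<le> 1 \<Longrightarrow> q \<in> DD" by (simp add: DD_def Qs_def)

lemma kk_meas: "q \<in> DD \<Longrightarrow> (\<lambda>x. kk f x q) \<in> borel_measurable PS"
proof -
  assume q: "q \<in> DD"
  have z: "0 \<in> DD" by (simp add: DD_def Qs_def)
  show ?thesis unfolding kk_def PS_def
    using q z by measurable
qed

lemma SE_meas: "-1 \<le> a \<Longrightarrow> b \<le> 1 \<Longrightarrow> SE f a b \<in> borel_measurable PS"
  unfolding SE_def
  apply (rule borel_measurable_SUP[OF countable_Qs])
  apply (rule measurable_compose[OF kk_meas borel_measurable_ereal[OF measurable_ident_sets]])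
  by (auto simp: DD_def Qs_def)

lemma rat_1n: "1 - 1/real (Suc n) \<in> \<rat>" "-1 + 1/real (Suc n) \<in> \<rat>"
  by (simp_all add: Rats_diff Rats_add Rats_divide Rats_minus_iff)

lemma sets_Gm: "Gm f \<in> sets PS"
proof -
  have "Gm f = (\<Union>n. {x\<in>space PS. SE f (-1) 0 x \<le> SE f 0 (1 - 1/Suc n) x})"
    unfolding Gm_def by auto
  also have "\<dots> \<in> sets PS"
  proof -
    have m: "{x\<in>space PS. SE f (-1) 0 x \<le> SE f 0 (1 - 1/Suc n) x} \<in> sets PS" for n
      by (intro borel_measurable_le SE_meas) auto
    show ?thesis using m by blast
  qed
  finally show ?thesis .
qed

lemma sets_Gp: "Gp f \<in> sets PS"
proof -
  have "Gp f = (\<Union>n. {x\<in>space PS. SE f 0 1 x \<le> SE f (-1 + 1/Suc n) 0 x})"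
    unfolding Gp_def by auto
  also have "\<dots> \<in> sets PS"
  proof -
    have m: "{x\<in>space PS. SE f 0 1 x \<le> SE f (-1 + 1/Suc n) 0 x} \<in> sets PS" for n
      by (intro borel_measurable_le SE_meas) auto
    show ?thesis using m by blast
  qed
  finally show ?thesis .
qed

lemma sets_N1: "N1 f \<in> sets PS"
  unfolding N1_def
  by (intro borel_measurable_eq SE_meas measurable_compose[OF kk_meas borel_measurable_ereal[OF measurable_ident_sets]])
     (auto intro: DD_mem)

lemma sets_N2: "N2 f \<in> sets PS"
  unfolding N2_def
  by (intro borel_measurable_eq SE_meas measurable_compose[OF kk_meas borel_measurable_ereal[OF measurable_ident_sets]])
     (auto intro: DD_mem)

lemma sets_TT: "TT f \<in> sets PS"
  unfolding TT_def by (intro borel_measurable_eq SE_meas) auto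


definition Phi :: "(real \<Rightarrow> real) \<Rightarrow> real \<Rightarrow> real \<Rightarrow> real" where
  "Phi w c = (\<lambda>q\<in>DD. w q - c)"

lemma Phi_space: "Phi w c \<in> space PS"
  by (simp add: Phi_def PS_def space_PiM)

lemma zero_DD: "0 \<in> DD" and one_DD: "1 \<in> DD" and mone_DD: "-1 \<in> DD"
  by (simp_all add: DD_def Qs_def)

lemma kk_Phi: "q \<in> DD \<Longrightarrow> kk f (Phi w c) q = kk f w q"
  using zero_DD by (simp add: kk_def Phi_def)

lemma Qs_DD: "-1 \<le> a \<Longrightarrow> b \<le> 1 \<Longrightarrow> Qs a b \<subseteq> DD"
  by (auto simp: DD_def Qs_def)

context
  fixes f w :: "real \<Rightarrow> real" and c :: real
  assumes fc: "continuous_on {-1..1} f" and wc: "continuous_on {-1..1} w" and f0: "f 0 = 0"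
begin

lemma SE_Phi: assumes "-1 \<le> a" "a \<le> b" "b \<le> 1" "a \<in> \<rat>" "b \<in> \<rat>"
  shows "SE f a b (Phi w c) = ereal (Sup (kk f w ` {a..b}))"
proof -
  have "SE f a b (Phi w c) = (SUP q\<in>Qs a b. ereal (kk f w q))"
    unfolding SE_def using Qs_DD[of a b] assms by (intro SUP_cong refl) (auto simp: kk_Phi)
  also have "\<dots> = ereal (Sup (kk f w ` {a..b}))"
    using assms by (intro sup_rat kk_cont[OF fc wc f0]) auto
  finally show ?thesis .
qed

lemma Gm_iff: "Phi w c \<in> Gm f \<longleftrightarrow> sigma_minus f w < 1"
proof -
  have "Phi w c \<in> Gm f \<longleftrightarrow> (\<exists>n::nat. Sup (kk f w ` {-1..0}) \<le> Sup (kk f w ` {0..1 - 1/Suc n}))"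
    unfolding Gm_def using Phi_space rat_1n
    by (simp add: SE_Phi)
  also have "\<dots> \<longleftrightarrow> sigma_minus f w < 1"
    using sigma_minus_iff[OF fc wc f0] Cm_iff[OF fc wc f0] by simp
  finally show ?thesis .
qed

lemma Gp_iff: "Phi w c \<in> Gp f \<longleftrightarrow> sigma_plus f w > -1"
proof -
  have "Phi w c \<in> Gp f \<longleftrightarrow> (\<exists>n::nat. Sup (kk f w ` {0..1}) \<le> Sup (kk f w ` {-1 + 1/Suc n..0}))"
    unfolding Gp_def using Phi_space rat_1n
    by (simp add: SE_Phi)
  also have "\<dots> \<longleftrightarrow> sigma_plus f w > -1"
    using sigma_plus_iff[OF fc wc f0] Cp_iff[OF fc wc f0] by simp
  finally show ?thesis .
qed

lemma N1_iff: "Phi w c \<in> N1 f \<longleftrightarrow> Sup (kk f w ` {-1..0}) = kk f w 1"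
  unfolding N1_def using Phi_space by (simp add: SE_Phi kk_Phi one_DD)

lemma N2_iff: "Phi w c \<in> N2 f \<longleftrightarrow> Sup (kk f w ` {0..1}) = kk f w (-1)"
  unfolding N2_def using Phi_space by (simp add: SE_Phi kk_Phi mone_DD)

lemma TT_iff: "Phi w c \<in> TT f \<longleftrightarrow> Sup (kk f w ` {-1..0}) = Sup (kk f w ` {0..1})"
  unfolding TT_def using Phi_space by (simp add: SE_Phi)

lemma rel1: "Phi w c \<notin> Gm f \<Longrightarrow> Phi w c \<notin> Gp f \<Longrightarrow> Phi w c \<in> N1 f"
  unfolding Gm_iff Gp_iff N1_iff sigma_minus_iff[OF fc wc f0] sigma_plus_iff[OF fc wc f0]
  by (rule R1[OF fc wc f0])

lemma rel2: "Phi w c \<in> Gm f \<Longrightarrow> Phi w c \<in> Gp f \<Longrightarrow> Phi w c \<in> TT f"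
  unfolding Gm_iff Gp_iff TT_iff sigma_minus_iff[OF fc wc f0] sigma_plus_iff[OF fc wc f0]
  by (rule R2[OF fc wc f0])

lemma rel3: "Phi w c \<in> TT f \<Longrightarrow> (Phi w c \<in> Gm f \<and> Phi w c \<in> Gp f) \<or> Phi w c \<in> N1 f \<or> Phi w c \<in> N2 f"
  unfolding Gm_iff Gp_iff TT_iff N1_iff N2_iff sigma_minus_iff[OF fc wc f0] sigma_plus_iff[OF fc wc f0]
  using R3[OF fc wc f0] by blast

end


definition NM :: "real \<Rightarrow> real list \<Rightarrow> nat \<Rightarrow> real measure" where
  "NM s ts i = density lborel (\<lambda>x. ennreal (normal_density 0 (s * sqrt (ts ! Suc i - ts ! i)) x))"

definition dvec :: "real list \<Rightarrow> ('a \<Rightarrow> real \<Rightarrow> real) \<Rightarrow> 'a \<Rightarrow> nat \<Rightarrow> real" where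
  "dvec ts W = (\<lambda>\<omega>. \<lambda>i\<in>{..<length ts - 1}. W \<omega> (ts ! Suc i) - W \<omega> (ts ! i))"

lemma NM_prob: "s > 0 \<Longrightarrow> sorted_wrt (<) ts \<Longrightarrow> i < length ts - 1 \<Longrightarrow> prob_space (NM s ts i)"
  unfolding NM_def
  by (rule prob_space_normal_density)
     (auto simp: sorted_wrt_iff_nth_less intro!: mult_pos_pos)

lemma sets_NM[simp, measurable_cong]: "sets (NM s ts i) = sets borel"
  by (simp add: NM_def)

lemma BM_vec:
  assumes bm: "BM_on M s a b W" and ts: "sorted_wrt (<) ts" "set ts \<subseteq> {a..b}" "2 \<le> length ts"
  shows "distr M (PiM {..<length ts - 1} (\<lambda>_. borel)) (dvec ts W) = PiM {..<length ts - 1} (NM s ts)"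
proof -
  interpret prob_space M using bm by (simp add: BM_on_def)
  let ?I = "{..<length ts - 1}"
  have mt: "(\<lambda>\<omega>. W \<omega> t) \<in> borel_measurable M" if "t \<in> set ts" for t
    using bm that ts by (auto simp: BM_on_def)
  have rv: "random_variable borel (\<lambda>\<omega>. W \<omega> (ts ! Suc i) - W \<omega> (ts ! i))" if "i \<in> ?I" for i
    using that by (intro borel_measurable_diff mt nth_mem) auto
  have ind: "indep_vars (\<lambda>_. borel) (\<lambda>i \<omega>. W \<omega> (ts ! Suc i) - W \<omega> (ts ! i)) ?I"
    and dis: "\<And>i. i < length ts - 1 \<Longrightarrow> distributed M lborel (\<lambda>\<omega>. W \<omega> (ts ! Suc i) - W \<omega> (ts ! i))
           (\<lambda>x. ennreal (normal_density 0 (s * sqrt (ts ! Suc i - ts ! i)) x))"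
    using bm ts by (auto simp: BM_on_def)
  have "0 \<in> ?I" using ts(3) by simp
  then have ne: "?I \<noteq> {}" by blast
  have "distr M (PiM ?I (\<lambda>_. borel)) (dvec ts W) =
        PiM ?I (\<lambda>i. distr M borel (\<lambda>\<omega>. W \<omega> (ts ! Suc i) - W \<omega> (ts ! i)))"
    using indep_vars_iff_distr_eq_PiM'[OF ne rv] ind unfolding dvec_def by simp
  also have "\<dots> = PiM ?I (NM s ts)"
  proof (rule PiM_cong[OF refl])
    fix i assume i: "i \<in> ?I"
    have "distr M borel (\<lambda>\<omega>. W \<omega> (ts ! Suc i) - W \<omega> (ts ! i)) = distr M lborel (\<lambda>\<omega>. W \<omega> (ts ! Suc i) - W \<omega> (ts ! i))"
      by (rule distr_cong) auto
    also have "\<dots> = NM s ts i"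
      using distributed_distr_eq_density[OF dis] i unfolding NM_def by simp
    finally show "distr M borel (\<lambda>\<omega>. W \<omega> (ts ! Suc i) - W \<omega> (ts ! i)) = NM s ts i" .
  qed
  finally show ?thesis .
qed


lemma dvec_meas:
  assumes "\<And>t. t \<in> set ts \<Longrightarrow> (\<lambda>\<omega>. W \<omega> t) \<in> borel_measurable M"
  shows "dvec ts W \<in> measurable M (PiM {..<length ts - 1} (\<lambda>_. borel))"
  unfolding dvec_def
  by (intro measurable_restrict borel_measurable_diff assms nth_mem) auto

lemma emeasure_PiM_NM:
  assumes "s > 0" "sorted_wrt (<) ts" "\<And>i. i < length ts - 1 \<Longrightarrow> A i \<in> sets borel"
  shows "emeasure (PiM {..<length ts - 1} (NM s ts)) (PiE {..<length ts - 1} A) = (\<Prod>i<length ts - 1. emeasure (NM s ts i) (A i))"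
proof -
  have "emeasure (PiM {..<length ts - 1} (NM s ts)) (prod_emb {..<length ts - 1} (NM s ts) {..<length ts - 1} (PiE {..<length ts - 1} A))
     = (\<Prod>i<length ts - 1. emeasure (NM s ts i) (A i))"
    using assms by (intro emeasure_PiM_emb NM_prob) auto
  moreover have "prod_emb {..<length ts - 1} (NM s ts) {..<length ts - 1} (PiE {..<length ts - 1} A) = PiE {..<length ts - 1} A"
    using assms by (intro prod_emb_PiE_same_index) (auto simp: NM_def)
  ultimately show ?thesis by simp
qed


lemma strict_chain: "(\<forall>j<K. \<tau> j < (\<tau> (Suc j) :: real)) \<Longrightarrow> i < j \<Longrightarrow> j \<le> K \<Longrightarrow> \<tau> i < \<tau> j"
proof (induction j)
  case 0 then show ?case by simp
next
  case (Suc j)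
  show ?case
  proof (cases "i = j")
    case True then show ?thesis using Suc.prems by auto
  next
    case False
    then have "i < j" using Suc.prems by simp
    then have "\<tau> i < \<tau> j" using Suc by simp
    moreover have "\<tau> j < \<tau> (Suc j)" using Suc.prems by simp
    ultimately show ?thesis by (rule less_trans)
  qed
qed

lemma BM_prod:
  assumes bm: "BM_on M s a b W" and s: "s > 0" and K: "0 < K"
    and mono: "\<forall>j<K. \<tau> j < \<tau> (Suc j)" and rng: "\<forall>j\<le>K. \<tau> j \<in> {a..b}"
    and A: "\<And>j. j < K \<Longrightarrow> A j \<in> sets borel"
  shows "emeasure M {\<omega>\<in>space M. \<forall>j<K. W \<omega> (\<tau> (Suc j)) - W \<omega> (\<tau> j) \<in> A j}
       = (\<Prod>j<K. emeasure (density lborel (\<lambda>x. ennreal (normal_density 0 (s * sqrt (\<tau> (Suc j) - \<tau> j)) x))) (A j))"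
proof -
  define ts where "ts = map \<tau> [0..<Suc K]"
  have len: "length ts = Suc K" by (simp add: ts_def)
  have nth: "i \<le> K \<Longrightarrow> ts ! i = \<tau> i" for i by (simp add: ts_def nth_map del: upt_Suc)
  have sorted: "sorted_wrt (<) ts"
    unfolding sorted_wrt_iff_nth_less len using nth strict_chain[OF mono] by auto
  have set: "set ts \<subseteq> {a..b}" using rng by (auto simp: ts_def)
  have mt: "(\<lambda>\<omega>. W \<omega> t) \<in> borel_measurable M" if "t \<in> set ts" for t
    using bm that set by (auto simp: BM_on_def)
  have V: "distr M (PiM {..<K} (\<lambda>_. borel)) (dvec ts W) = PiM {..<K} (NM s ts)"
    using BM_vec[OF bm sorted set] len K by simp
  have eq: "{\<omega>\<in>space M. \<forall>j<K. W \<omega> (\<tau> (Suc j)) - W \<omega> (\<tau> j) \<in> A j} = dvec ts W -` PiE {..<K} A \<inter> space M"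
  proof -
    have "dvec ts W \<omega> \<in> PiE {..<K} A \<longleftrightarrow> (\<forall>j<K. W \<omega> (\<tau> (Suc j)) - W \<omega> (\<tau> j) \<in> A j)" for \<omega>
    proof -
      have "dvec ts W \<omega> = restrict (\<lambda>j. W \<omega> (ts ! Suc j) - W \<omega> (ts ! j)) {..<K}"
        unfolding dvec_def len by simp
      then have "dvec ts W \<omega> \<in> PiE {..<K} A \<longleftrightarrow> (\<forall>j\<in>{..<K}. W \<omega> (ts ! Suc j) - W \<omega> (ts ! j) \<in> A j)"
        by (simp only: restrict_PiE_iff)
      also have "\<dots> \<longleftrightarrow> (\<forall>j<K. W \<omega> (\<tau> (Suc j)) - W \<omega> (\<tau> j) \<in> A j)"
        using nth by (auto simp: Suc_leI less_imp_le)
      finally show ?thesis .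
    qed
    then show ?thesis by blast
  qed
  have "emeasure M (dvec ts W -` PiE {..<K} A \<inter> space M) = emeasure (distr M (PiM {..<K} (\<lambda>_. borel)) (dvec ts W)) (PiE {..<K} A)"
    using A dvec_meas[of ts W M, OF mt] len
    by (intro emeasure_distr[symmetric]) (auto intro!: sets_PiM_I_finite)
  also have "\<dots> = (\<Prod>i<K. emeasure (NM s ts i) (A i))"
    unfolding V using emeasure_PiM_NM[OF s sorted, of A] A len by simp
  also have "\<dots> = (\<Prod>j<K. emeasure (density lborel (\<lambda>x. ennreal (normal_density 0 (s * sqrt (\<tau> (Suc j) - \<tau> j)) x))) (A j))"
    by (intro prod.cong refl) (simp add: NM_def nth)
  finally show ?thesis using eq by simp
qed


definition FD :: "'a measure \<Rightarrow> real \<Rightarrow> ('a \<Rightarrow> real \<Rightarrow> real) \<Rightarrow> bool" where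
  "FD M s W \<longleftrightarrow> prob_space M \<and> (\<forall>t\<in>{-1..1}. (\<lambda>\<omega>. W \<omega> t) \<in> borel_measurable M) \<and>
     (\<forall>ts. sorted_wrt (<) ts \<and> set ts \<subseteq> {-1..1} \<and> {-1,0,1} \<subseteq> set ts \<longrightarrow>
        distr M (PiM {..<length ts - 1} (\<lambda>_. borel)) (dvec ts W) = PiM {..<length ts - 1} (NM s ts))"

lemma len3: "{-1,0,1::real} \<subseteq> set ts \<Longrightarrow> 3 \<le> length ts"
proof -
  assume a: "{-1,0,1::real} \<subseteq> set ts"
  have "card {-1,0,1::real} \<le> card (set ts)" using a by (intro card_mono) auto
  moreover have "card {-1,0,1::real} = 3" by simp
  moreover have "card (set ts) \<le> length ts" by (rule card_length)
  ultimately show ?thesis by linarith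
qed

lemma BM_FD: "BM_on M s (-1) 1 W \<Longrightarrow> FD M s W"
  unfolding FD_def
proof (intro conjI allI impI)
  assume bm: "BM_on M s (-1) 1 W"
  then show "prob_space M" "\<forall>t\<in>{- 1..1}. (\<lambda>\<omega>. W \<omega> t) \<in> borel_measurable M" by (auto simp: BM_on_def)
  fix ts :: "real list" assume ts: "sorted_wrt (<) ts \<and> set ts \<subseteq> {- 1..1} \<and> {- 1, 0, 1} \<subseteq> set ts"
  then have "2 \<le> length ts" using len3 by fastforce
  then show "distr M (PiM {..<length ts - 1} (\<lambda>_. borel)) (dvec ts W) = PiM {..<length ts - 1} (NM s ts)"
    using BM_vec[OF bm] ts by blast
qed

definition tsJ :: "real set \<Rightarrow> real list" where "tsJ J = sorted_list_of_set (J \<union> {-1,0,1})"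
definition ixJ :: "real set \<Rightarrow> real \<Rightarrow> nat" where "ixJ J j = (SOME k. k < length (tsJ J) \<and> tsJ J ! k = j)"
definition HJ :: "real set \<Rightarrow> (real \<Rightarrow> real set) \<Rightarrow> (nat \<Rightarrow> real) set" where
  "HJ J A = {d \<in> space (PiM {..<length (tsJ J) - 1} (\<lambda>_. borel::real measure)). \<forall>j\<in>J. (\<Sum>i<ixJ J j. d i) \<in> A j}"

lemma FD_key:
  assumes fd: "FD M s W" and J: "finite J" "J \<subseteq> {-1..1}" and A: "\<And>j. j \<in> J \<Longrightarrow> A j \<in> sets borel"
  shows "emeasure M {\<omega>\<in>space M. \<forall>j\<in>J. W \<omega> j - W \<omega> (-1) \<in> A j}
       = emeasure (PiM {..<length (tsJ J) - 1} (NM s (tsJ J))) (HJ J A)"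
proof -
  define ts where "ts = tsJ J"
  define n where "n = length ts"
  define I where "I = {..<n - 1}"
  have fin: "finite (J \<union> {-1,0,1})" using J by simp
  have set: "set ts = J \<union> {-1,0,1}" unfolding ts_def tsJ_def by (rule set_sorted_list_of_set[OF fin])
  have sorted: "sorted_wrt (<) ts" unfolding ts_def tsJ_def by (rule strict_sorted_list_of_set)
  have rng: "set ts \<subseteq> {-1..1}" using set J by auto
  have mt: "(\<lambda>\<omega>. W \<omega> t) \<in> borel_measurable M" if "t \<in> set ts" for t
    using fd rng that by (auto simp: FD_def)
  have D: "distr M (PiM I (\<lambda>_. borel)) (dvec ts W) = PiM I (NM s ts)"
    using fd sorted rng set unfolding FD_def I_def n_def by auto
  have ts0: "ts ! 0 = -1"
  proof -
    obtain k where k: "k < n" "ts ! k = -1" using set unfolding n_def by (metis UnI2 in_set_conv_nth insertI1)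
    show ?thesis
    proof (cases "k = 0")
      case True then show ?thesis using k by simp
    next
      case False
      then have "0 < k" by simp
      then have "ts ! 0 < ts ! k" using sorted k unfolding sorted_wrt_iff_nth_less n_def by blast
      moreover have "0 < n" using k by linarith
      then have "ts ! 0 \<in> set ts" unfolding n_def by (rule nth_mem)
      ultimately show ?thesis using k rng by fastforce
    qed
  qed
  have ix: "ixJ J j < n \<and> ts ! ixJ J j = j" if "j \<in> J" for j
  proof -
    have "\<exists>k. k < n \<and> ts ! k = j" using that set unfolding n_def by (metis UnI1 in_set_conv_nth)
    then show ?thesis unfolding ixJ_def ts_def[symmetric] n_def[symmetric] by (rule someI_ex)
  qed
  have tele: "(\<Sum>i<ixJ J j. dvec ts W \<omega> i) = W \<omega> j - W \<omega> (-1)" if "j \<in> J" for j \<omega>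
  proof -
    have "(\<Sum>i<ixJ J j. dvec ts W \<omega> i) = (\<Sum>i<ixJ J j. W \<omega> (ts ! Suc i) - W \<omega> (ts ! i))"
      using ix[OF that] by (intro sum.cong refl) (auto simp: dvec_def n_def)
    also have "\<dots> = W \<omega> (ts ! ixJ J j) - W \<omega> (ts ! 0)"
      by (rule sum_lessThan_telescope)
    finally show ?thesis using ix[OF that] ts0 by simp
  qed
  have sp: "dvec ts W \<omega> \<in> space (PiM I (\<lambda>_. borel::real measure))" for \<omega>
    by (simp add: dvec_def space_PiM I_def n_def)
  have eq: "{\<omega>\<in>space M. \<forall>j\<in>J. W \<omega> j - W \<omega> (-1) \<in> A j} = dvec ts W -` HJ J A \<inter> space M"
    using tele sp unfolding HJ_def ts_def[symmetric] n_def[symmetric] I_def[symmetric] by auto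
  have Hs: "HJ J A \<in> sets (PiM I (\<lambda>_. borel))"
  proof -
    have s1: "(\<lambda>d. \<Sum>i<ixJ J j. d i) -` A j \<inter> space (PiM I (\<lambda>_. borel::real measure)) \<in> sets (PiM I (\<lambda>_. borel))"
      if "j \<in> J" for j
    proof (rule measurable_sets[OF _ A[OF that]])
      show "(\<lambda>d. \<Sum>i<ixJ J j. d i) \<in> borel_measurable (PiM I (\<lambda>_. borel::real measure))"
      proof -
        have c: "(\<lambda>d. d i) \<in> borel_measurable (PiM I (\<lambda>_. borel::real measure))" if "i \<in> {..<ixJ J j}" for i
          using ix[OF \<open>j \<in> J\<close>] that by (intro measurable_component_singleton) (auto simp: I_def)
        have "(\<lambda>d. \<Sum>i\<in>{..<ixJ J j}. (\<lambda>i d. d i) i d) \<in> borel_measurable (PiM I (\<lambda>_. borel::real measure))"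
          by (rule borel_measurable_sum) (rule c)
        then show ?thesis by simp
      qed
    qed
    have "HJ J A = {d\<in>space (PiM I (\<lambda>_. borel::real measure)). \<forall>j\<in>J. d \<in> (\<lambda>d. \<Sum>i<ixJ J j. d i) -` A j \<inter> space (PiM I (\<lambda>_. borel::real measure))}"
      unfolding HJ_def ts_def[symmetric] n_def[symmetric] I_def[symmetric] by auto
    also have "\<dots> \<in> sets (PiM I (\<lambda>_. borel))"
    proof (rule sets.sets_Collect_finite_All[OF _ J(1)])
      fix j assume j: "j \<in> J"
      have "{d\<in>space (PiM I (\<lambda>_. borel::real measure)). d \<in> (\<lambda>d. \<Sum>i<ixJ J j. d i) -` A j \<inter> space (PiM I (\<lambda>_. borel::real measure))}
          = (\<lambda>d. \<Sum>i<ixJ J j. d i) -` A j \<inter> space (PiM I (\<lambda>_. borel::real measure))" by blast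
      then show "{d\<in>space (PiM I (\<lambda>_. borel::real measure)). d \<in> (\<lambda>d. \<Sum>i<ixJ J j. d i) -` A j \<inter> space (PiM I (\<lambda>_. borel::real measure))} \<in> sets (PiM I (\<lambda>_. borel))"
        using s1[OF j] by simp
    qed
    finally show ?thesis .
  qed
  have "emeasure M (dvec ts W -` HJ J A \<inter> space M) = emeasure (distr M (PiM I (\<lambda>_. borel)) (dvec ts W)) (HJ J A)"
    using Hs dvec_meas[of ts W M, OF mt] by (intro emeasure_distr[symmetric]) (auto simp: I_def n_def)
  also have "\<dots> = emeasure (PiM I (NM s ts)) (HJ J A)" using D by simp
  finally show ?thesis using eq unfolding I_def n_def ts_def by simp
qed

lemma Phi_meas: "FD M s W \<Longrightarrow> (\<lambda>\<omega>. Phi (W \<omega>) (W \<omega> (-1))) \<in> measurable M PS"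
  unfolding Phi_def PS_def FD_def
  by (intro measurable_restrict borel_measurable_diff) (auto simp: DD_def Qs_def)

lemma Law:
  assumes fm: "FD M s W" and fn: "FD N s V"
  shows "distr M PS (\<lambda>\<omega>. Phi (W \<omega>) (W \<omega> (-1))) = distr N PS (\<lambda>\<omega>. Phi (V \<omega>) (V \<omega> (-1)))"
proof -
  have cyl: "emeasure (distr K PS (\<lambda>\<omega>. Phi (U \<omega>) (U \<omega> (-1)))) (prod_emb DD (\<lambda>_. borel) J (PiE J A))
     = emeasure (PiM {..<length (tsJ J) - 1} (NM s (tsJ J))) (HJ J A)"
    if fk: "FD K s U" and J: "finite J" "J \<subseteq> DD" and A: "\<And>j. j \<in> J \<Longrightarrow> A j \<in> sets borel"
    for K :: "'c measure" and U J A
  proof -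
    have sub: "J \<subseteq> {-1..1}" using J by (auto simp: DD_def Qs_def)
    have ps: "prod_emb DD (\<lambda>_. borel) J (PiE J A) \<in> sets PS"
      unfolding PS_def using J A by (intro sets_PiM_I) auto
    have "emeasure (distr K PS (\<lambda>\<omega>. Phi (U \<omega>) (U \<omega> (-1)))) (prod_emb DD (\<lambda>_. borel) J (PiE J A))
        = emeasure K ((\<lambda>\<omega>. Phi (U \<omega>) (U \<omega> (-1))) -` prod_emb DD (\<lambda>_. borel) J (PiE J A) \<inter> space K)"
      by (rule emeasure_distr[OF Phi_meas[OF fk] ps])
    also have "(\<lambda>\<omega>. Phi (U \<omega>) (U \<omega> (-1))) -` prod_emb DD (\<lambda>_. borel) J (PiE J A) \<inter> space K
        = {\<omega>\<in>space K. \<forall>j\<in>J. U \<omega> j - U \<omega> (-1) \<in> A j}"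
      using J by (auto simp: prod_emb_def Phi_def PiE_iff subset_iff)
    also have "emeasure K \<dots> = emeasure (PiM {..<length (tsJ J) - 1} (NM s (tsJ J))) (HJ J A)"
      by (rule FD_key[OF fk J(1) sub A])
    finally show ?thesis .
  qed
  interpret pm: prob_space M using fm by (simp add: FD_def)
  have pd: "prob_space (distr M PS (\<lambda>\<omega>. Phi (W \<omega>) (W \<omega> (-1))))"
    by (rule pm.prob_space_distr[OF Phi_meas[OF fm]])
  show ?thesis
  proof (rule measure_eqI_PiM_infinite[where I=DD and M="\<lambda>_. borel"])
    show "sets (distr M PS (\<lambda>\<omega>. Phi (W \<omega>) (W \<omega> (-1)))) = sets (PiM DD (\<lambda>_. borel))" by (simp add: PS_def)
    show "sets (distr N PS (\<lambda>\<omega>. Phi (V \<omega>) (V \<omega> (-1)))) = sets (PiM DD (\<lambda>_. borel))" by (simp add: PS_def)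
    show "finite_measure (distr M PS (\<lambda>\<omega>. Phi (W \<omega>) (W \<omega> (-1))))"
      using pd unfolding prob_space_def by simp
  next
    fix A :: "real \<Rightarrow> real set" and J assume "finite J" "J \<subseteq> DD" "\<And>i. i \<in> J \<Longrightarrow> A i \<in> sets borel"
    then show "emeasure (distr M PS (\<lambda>\<omega>. Phi (W \<omega>) (W \<omega> (-1)))) (prod_emb DD (\<lambda>_. borel) J (PiE J A)) =
          emeasure (distr N PS (\<lambda>\<omega>. Phi (V \<omega>) (V \<omega> (-1)))) (prod_emb DD (\<lambda>_. borel) J (PiE J A))"
      using cyl[OF fm] cyl[OF fn] by simp
  qed
qed


definition VV :: "('c \<Rightarrow> real \<Rightarrow> real) \<Rightarrow> ('c \<Rightarrow> real \<Rightarrow> real) \<Rightarrow> 'c \<Rightarrow> real \<Rightarrow> real" where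
  "VV B1 B2 \<omega> t = (if t \<le> 0 then - B1 \<omega> (-t) else B2 \<omega> t)"

abbreviation "P01 \<equiv> PiM {0..1::real} (\<lambda>_. borel::real measure)"

context
  fixes M :: "'c measure" and s :: real and B1 B2 :: "'c \<Rightarrow> real \<Rightarrow> real"
  assumes s: "s > 0" and bm1: "BM_on M s 0 1 B1" and bm2: "BM_on M s 0 1 B2"
    and zero: "\<forall>\<omega>\<in>space M. B1 \<omega> 0 = 0 \<and> B2 \<omega> 0 = 0"
    and ind: "prob_space.indep_var M P01 (\<lambda>\<omega>. restrict (B1 \<omega>) {0..1}) P01 (\<lambda>\<omega>. restrict (B2 \<omega>) {0..1})"
begin

lemma pM: "prob_space M" using bm1 by (simp add: BM_on_def)

lemma B1m: "t \<in> {0..1} \<Longrightarrow> (\<lambda>\<omega>. B1 \<omega> t) \<in> borel_measurable M" using bm1 by (simp add: BM_on_def)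
lemma B2m: "t \<in> {0..1} \<Longrightarrow> (\<lambda>\<omega>. B2 \<omega> t) \<in> borel_measurable M" using bm2 by (simp add: BM_on_def)

lemma V_meas: "t \<in> {-1..1} \<Longrightarrow> (\<lambda>\<omega>. VV B1 B2 \<omega> t) \<in> borel_measurable M"
proof (cases "t \<le> 0")
  case True
  assume "t \<in> {-1..1}"
  then have "(\<lambda>\<omega>. - B1 \<omega> (-t)) \<in> borel_measurable M" using True by (intro borel_measurable_uminus B1m) auto
  then show ?thesis using True by (simp add: VV_def)
next
  case False
  assume "t \<in> {-1..1}"
  then have "(\<lambda>\<omega>. B2 \<omega> t) \<in> borel_measurable M" using False by (intro B2m) auto
  then show ?thesis using False by (simp add: VV_def)
qed

lemma V_cont: assumes "\<omega> \<in> space M" shows "continuous_on {-1..1} (VV B1 B2 \<omega>)"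
proof -
  have c1: "continuous_on {0..1} (B1 \<omega>)" "continuous_on {0..1} (B2 \<omega>)"
    using bm1 bm2 assms by (auto simp: BM_on_def)
  have "continuous_on {-1..1} (\<lambda>x. if x \<le> 0 then - B1 \<omega> (-x) else B2 \<omega> x)"
  proof (rule continuous_on_cases_le[where h="\<lambda>x. x"])
    show "continuous_on {x \<in> {-1..1}. x \<le> 0} (\<lambda>x. - B1 \<omega> (- x))"
      by (intro continuous_intros continuous_on_compose2[OF c1(1)]) auto
    show "continuous_on {x \<in> {-1..1}. 0 \<le> x} (B2 \<omega>)"
      by (rule continuous_on_subset[OF c1(2)]) auto
  qed (use zero assms in auto)
  then show ?thesis unfolding VV_def by simp
qed

lemma V_zero: "\<omega> \<in> space M \<Longrightarrow> VV B1 B2 \<omega> 0 = 0"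
  using zero by (simp add: VV_def)

lemma indep_mult:
  assumes C1: "C1 \<in> sets P01" and C2: "C2 \<in> sets P01"
  shows "emeasure M {\<omega>\<in>space M. restrict (B1 \<omega>) {0..1} \<in> C1 \<and> restrict (B2 \<omega>) {0..1} \<in> C2}
    = emeasure M {\<omega>\<in>space M. restrict (B1 \<omega>) {0..1} \<in> C1} * emeasure M {\<omega>\<in>space M. restrict (B2 \<omega>) {0..1} \<in> C2}"
proof -
  interpret prob_space M by (rule pM)
  let ?R1 = "\<lambda>\<omega>. restrict (B1 \<omega>) {0..1}" and ?R2 = "\<lambda>\<omega>. restrict (B2 \<omega>) {0..1}"
  have rv1: "random_variable P01 ?R1" and rv2: "random_variable P01 ?R2"
    and J: "distr M P01 ?R1 \<Otimes>\<^sub>M distr M P01 ?R2 = distr M (P01 \<Otimes>\<^sub>M P01) (\<lambda>x. (?R1 x, ?R2 x))"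
    using ind unfolding indep_var_distribution_eq by auto
  interpret D2: prob_space "distr M P01 ?R2" by (rule prob_space_distr[OF rv2])
  have pm: "(\<lambda>x. (?R1 x, ?R2 x)) \<in> measurable M (P01 \<Otimes>\<^sub>M P01)" using rv1 rv2 by (rule measurable_Pair)
  have "emeasure M {\<omega>\<in>space M. ?R1 \<omega> \<in> C1 \<and> ?R2 \<omega> \<in> C2} = emeasure M ((\<lambda>x. (?R1 x, ?R2 x)) -` (C1 \<times> C2) \<inter> space M)"
    by (intro arg_cong2[where f=emeasure]) auto
  also have "\<dots> = emeasure (distr M (P01 \<Otimes>\<^sub>M P01) (\<lambda>x. (?R1 x, ?R2 x))) (C1 \<times> C2)"
    using C1 C2 by (intro emeasure_distr[symmetric] pm) auto
  also have "\<dots> = emeasure (distr M P01 ?R1) C1 * emeasure (distr M P01 ?R2) C2"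
    unfolding J[symmetric] using C1 C2 by (intro D2.emeasure_pair_measure_Times) auto
  also have "\<dots> = emeasure M {\<omega>\<in>space M. ?R1 \<omega> \<in> C1} * emeasure M {\<omega>\<in>space M. ?R2 \<omega> \<in> C2}"
    using C1 C2 rv1 rv2 by (simp add: emeasure_distr vimage_def Int_def conj_commute)
  finally show ?thesis .
qed

end


lemma sets_C:
  assumes "\<And>i. i \<in> S \<Longrightarrow> u i \<in> {0..1} \<and> v i \<in> {0..1}" "finite S" "\<And>i. i \<in> S \<Longrightarrow> A i \<in> sets borel"
  shows "{x\<in>space P01. \<forall>i\<in>S. x (u i) - x (v i) \<in> A i} \<in> sets P01"
proof (rule sets.sets_Collect_finite_All[OF _ assms(2)])
  fix i assume i: "i \<in> S"
  have m: "(\<lambda>x. x (u i) - x (v i)) \<in> borel_measurable P01"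
    using assms(1)[OF i] by (intro borel_measurable_diff measurable_component_singleton) auto
  have "{x\<in>space P01. x (u i) - x (v i) \<in> A i} = (\<lambda>x. x (u i) - x (v i)) -` A i \<inter> space P01" by blast
  then show "{x\<in>space P01. x (u i) - x (v i) \<in> A i} \<in> sets P01"
    using measurable_sets[OF m assms(3)[OF i]] by simp
qed

context
  fixes M :: "'c measure" and s :: real and B1 B2 :: "'c \<Rightarrow> real \<Rightarrow> real"
  assumes s: "s > 0" and bm1: "BM_on M s 0 1 B1" and bm2: "BM_on M s 0 1 B2"
    and zero: "\<forall>\<omega>\<in>space M. B1 \<omega> 0 = 0 \<and> B2 \<omega> 0 = 0"
    and ind: "prob_space.indep_var M P01 (\<lambda>\<omega>. restrict (B1 \<omega>) {0..1}) P01 (\<lambda>\<omega>. restrict (B2 \<omega>) {0..1})"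
begin

lemma FD_V: "FD M s (VV B1 B2)"
  unfolding FD_def
proof (intro conjI allI impI ballI)
  show pm: "prob_space M" by (rule pM[OF s bm1 bm2 zero ind])
  show "\<And>t. t \<in> {-1..1} \<Longrightarrow> (\<lambda>\<omega>. VV B1 B2 \<omega> t) \<in> borel_measurable M"
    by (rule V_meas[OF s bm1 bm2 zero ind])
  fix ts :: "real list" assume "sorted_wrt (<) ts \<and> set ts \<subseteq> {-1..1} \<and> {-1, 0, 1} \<subseteq> set ts"
  then have sorted: "sorted_wrt (<) ts" and rng: "set ts \<subseteq> {-1..1}" and has: "{-1, 0, 1} \<subseteq> set ts" by auto
  define n where "n = length ts"
  define I where "I = {..<n - 1}"
  have lt: "i < j \<Longrightarrow> j < n \<Longrightarrow> ts ! i < ts ! j" for i j using sorted unfolding sorted_wrt_iff_nth_less n_def by blast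
  have le: "i \<le> j \<Longrightarrow> j < n \<Longrightarrow> ts ! i \<le> ts ! j" for i j using lt by (cases "i = j") (auto simp: less_imp_le)
  have inr: "i < n \<Longrightarrow> ts ! i \<in> {-1..1}" for i using rng unfolding n_def by (meson nth_mem subsetD)
  obtain m where m: "m < n" "ts ! m = 0" using has unfolding n_def by (metis insert_subset in_set_conv_nth)
  obtain k1 where k1: "k1 < n" "ts ! k1 = -1" using has unfolding n_def by (metis insert_subset in_set_conv_nth)
  obtain k2 where k2: "k2 < n" "ts ! k2 = 1" using has unfolding n_def by (metis insert_subset in_set_conv_nth)
  have "k1 < m" using le[of m k1] k1 m by (cases "k1 < m") auto
  then have m0: "0 < m" by simp
  have "m < k2" using le[of k2 m] k2 m by (cases "m < k2") auto
  then have mn: "m < n - 1" using k2 by simp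
  have neg: "i \<le> m \<Longrightarrow> ts ! i \<le> 0" for i using le[of i m] m by simp
  have pos: "m \<le> i \<Longrightarrow> i < n \<Longrightarrow> 0 \<le> ts ! i" for i using le[of m i] m by simp
  define G where "G A i = emeasure (NM s ts i) (A i)" for A i
  let ?V = "VV B1 B2"
  let ?R1 = "\<lambda>\<omega>. restrict (B1 \<omega>) {0..1}" and ?R2 = "\<lambda>\<omega>. restrict (B2 \<omega>) {0..1}"
  have sets_eq: "sets (PiM I (NM s ts)) = sets (PiM I (\<lambda>_. borel))" by (intro sets_PiM_cong) auto
  have mt: "(\<lambda>\<omega>. ?V \<omega> t) \<in> borel_measurable M" if "t \<in> set ts" for t
    using that rng by (intro V_meas[OF s bm1 bm2 zero ind]) auto
  have dm: "dvec ts ?V \<in> measurable M (PiM I (\<lambda>_. borel))"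
    using dvec_meas[of ts ?V M, OF mt] unfolding I_def n_def by simp
  interpret prob_space M by (rule pm)
  show "distr M (PiM {..<length ts - 1} (\<lambda>_. borel)) (dvec ts ?V) = PiM {..<length ts - 1} (NM s ts)"
    unfolding n_def[symmetric] I_def[symmetric]
  proof (rule measure_eqI_PiM_finite[where I=I and M="\<lambda>_. borel" and A="\<lambda>_. space (PiM I (\<lambda>_. borel))"])
    show "finite I" by (simp add: I_def)
    show "sets (distr M (PiM I (\<lambda>_. borel)) (dvec ts ?V)) = sets (PiM I (\<lambda>_. borel))" by simp
    show "sets (PiM I (NM s ts)) = sets (PiM I (\<lambda>_. borel))" by (rule sets_eq)
    show "range (\<lambda>_. space (PiM I (\<lambda>_. borel))) \<subseteq> prod_algebra I (\<lambda>_. borel)"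
      using space_in_prod_algebra[of I "\<lambda>_. borel"] by (auto simp: space_PiM)
    show "(\<Union>i::nat. space (PiM I (\<lambda>_. borel))) = space (PiM I (\<lambda>_. borel))" by simp
    show "\<And>i::nat. emeasure (distr M (PiM I (\<lambda>_. borel)) (dvec ts ?V)) (space (PiM I (\<lambda>_. borel))) \<noteq> \<infinity>"
      using prob_space.emeasure_space_1[OF prob_space_distr[OF dm]] by simp
  next
    fix A :: "nat \<Rightarrow> real set" assume A: "\<And>i. i \<in> I \<Longrightarrow> A i \<in> sets borel"
    define C1 where "C1 = {x\<in>space P01. \<forall>i\<in>{..<m}. x (- (ts ! i)) - x (- (ts ! Suc i)) \<in> A i}"
    define C2 where "C2 = {x\<in>space P01. \<forall>i\<in>{m..<n-1}. x (ts ! Suc i) - x (ts ! i) \<in> A i}"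
    have C1s: "C1 \<in> sets P01" unfolding C1_def
    proof (rule sets_C)
      fix i assume i: "i \<in> {..<m}"
      then show "- (ts ! i) \<in> {0..1} \<and> - (ts ! Suc i) \<in> {0..1}"
        using inr[of i] inr[of "Suc i"] neg[of i] neg[of "Suc i"] m by auto
      show "A i \<in> sets borel" using i mn A by (auto simp: I_def)
    qed simp
    have C2s: "C2 \<in> sets P01" unfolding C2_def
    proof (rule sets_C)
      fix i assume i: "i \<in> {m..<n-1}"
      then show "ts ! Suc i \<in> {0..1} \<and> ts ! i \<in> {0..1}"
        using inr[of i] inr[of "Suc i"] pos[of i] pos[of "Suc i"] by auto
      show "A i \<in> sets borel" using i A by (auto simp: I_def)
    qed simp
    have dv1: "?V \<omega> (ts ! Suc i) - ?V \<omega> (ts ! i) = B1 \<omega> (- (ts ! i)) - B1 \<omega> (- (ts ! Suc i))"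
      if "i < m" for i \<omega>
      using neg[of i] neg[of "Suc i"] that by (simp add: VV_def)
    have dv2: "?V \<omega> (ts ! Suc i) - ?V \<omega> (ts ! i) = B2 \<omega> (ts ! Suc i) - B2 \<omega> (ts ! i)"
      if "m \<le> i" "i < n - 1" "\<omega> \<in> space M" for i \<omega>
    proof -
      have p1: "0 \<le> ts ! i" using pos[of i] that by simp
      have p2: "ts ! i < ts ! Suc i" using lt[of i "Suc i"] that by simp
      have e1: "?V \<omega> (ts ! Suc i) = B2 \<omega> (ts ! Suc i)" using p1 p2 by (simp add: VV_def)
      have e2: "?V \<omega> (ts ! i) = B2 \<omega> (ts ! i)"
      proof (cases "ts ! i \<le> 0")
        case True
        then have "ts ! i = 0" using p1 by simp
        then show ?thesis using zero that(3) by (simp add: VV_def)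
      qed (simp add: VV_def)
      show ?thesis using e1 e2 by simp
    qed
    have r1: "?R1 \<omega> \<in> C1 \<longleftrightarrow> (\<forall>i<m. B1 \<omega> (- (ts ! i)) - B1 \<omega> (- (ts ! Suc i)) \<in> A i)" for \<omega>
    proof -
      have "?R1 \<omega> \<in> space P01" by (simp add: space_PiM)
      moreover have "- (ts ! i) \<in> {0..1} \<and> - (ts ! Suc i) \<in> {0..1}" if "i < m" for i
        using inr[of i] inr[of "Suc i"] neg[of i] neg[of "Suc i"] m that by auto
      ultimately show ?thesis unfolding C1_def by auto
    qed
    have r2: "?R2 \<omega> \<in> C2 \<longleftrightarrow> (\<forall>i\<in>{m..<n-1}. B2 \<omega> (ts ! Suc i) - B2 \<omega> (ts ! i) \<in> A i)" for \<omega>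
    proof -
      have "?R2 \<omega> \<in> space P01" by (simp add: space_PiM)
      moreover have "ts ! Suc i \<in> {0..1} \<and> ts ! i \<in> {0..1}" if "i \<in> {m..<n-1}" for i
        using inr[of i] inr[of "Suc i"] pos[of i] pos[of "Suc i"] that by auto
      ultimately show ?thesis unfolding C2_def by auto
    qed
    have incl: "dvec ts ?V -` PiE I A \<inter> space M = {\<omega>\<in>space M. ?R1 \<omega> \<in> C1 \<and> ?R2 \<omega> \<in> C2}"
    proof -
      have "dvec ts ?V \<omega> \<in> PiE I A \<longleftrightarrow> ?R1 \<omega> \<in> C1 \<and> ?R2 \<omega> \<in> C2" if \<omega>: "\<omega> \<in> space M" for \<omega>
      proof -
        have "dvec ts ?V \<omega> = restrict (\<lambda>i. ?V \<omega> (ts ! Suc i) - ?V \<omega> (ts ! i)) I"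
          unfolding dvec_def I_def n_def by simp
        then have "dvec ts ?V \<omega> \<in> PiE I A \<longleftrightarrow> (\<forall>i\<in>I. ?V \<omega> (ts ! Suc i) - ?V \<omega> (ts ! i) \<in> A i)"
          by (simp only: restrict_PiE_iff)
        also have "\<dots> \<longleftrightarrow> (\<forall>i<m. ?V \<omega> (ts ! Suc i) - ?V \<omega> (ts ! i) \<in> A i) \<and>
                          (\<forall>i\<in>{m..<n-1}. ?V \<omega> (ts ! Suc i) - ?V \<omega> (ts ! i) \<in> A i)"
          using mn unfolding I_def by (auto simp: not_less)
        also have "\<dots> \<longleftrightarrow> (\<forall>i<m. B1 \<omega> (- (ts ! i)) - B1 \<omega> (- (ts ! Suc i)) \<in> A i) \<and>
                          (\<forall>i\<in>{m..<n-1}. B2 \<omega> (ts ! Suc i) - B2 \<omega> (ts ! i) \<in> A i)"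
          using dv1 dv2[OF _ _ \<omega>] by simp
        finally show ?thesis using r1 r2 by simp
      qed
      then show ?thesis by blast
    qed
    have PEs: "PiE I A \<in> sets (PiM I (\<lambda>_. borel))"
      using A by (intro sets_PiM_I_finite) (auto simp: I_def)
    have "emeasure (distr M (PiM I (\<lambda>_. borel)) (dvec ts ?V)) (PiE I A) = emeasure M (dvec ts ?V -` PiE I A \<inter> space M)"
      by (rule emeasure_distr[OF dm PEs])
    also have "\<dots> = emeasure M {\<omega>\<in>space M. ?R1 \<omega> \<in> C1} * emeasure M {\<omega>\<in>space M. ?R2 \<omega> \<in> C2}"
      unfolding incl by (rule indep_mult[OF s bm1 bm2 zero ind C1s C2s])
    also have "emeasure M {\<omega>\<in>space M. ?R1 \<omega> \<in> C1} = (\<Prod>i<m. G A i)"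
    proof -
      define \<tau> where "\<tau> j = - (ts ! (m - j))" for j
      have "{\<omega>\<in>space M. ?R1 \<omega> \<in> C1} = {\<omega>\<in>space M. \<forall>j<m. B1 \<omega> (\<tau> (Suc j)) - B1 \<omega> (\<tau> j) \<in> A (m - Suc j)}"
      proof -
        have "(\<forall>i<m. B1 \<omega> (- (ts ! i)) - B1 \<omega> (- (ts ! Suc i)) \<in> A i) \<longleftrightarrow>
              (\<forall>j<m. B1 \<omega> (\<tau> (Suc j)) - B1 \<omega> (\<tau> j) \<in> A (m - Suc j))" for \<omega>
        proof
          assume h: "\<forall>i<m. B1 \<omega> (- (ts ! i)) - B1 \<omega> (- (ts ! Suc i)) \<in> A i"
          show "\<forall>j<m. B1 \<omega> (\<tau> (Suc j)) - B1 \<omega> (\<tau> j) \<in> A (m - Suc j)"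
          proof (intro allI impI)
            fix j assume j: "j < m"
            have "Suc (m - Suc j) = m - j" using j by simp
            then show "B1 \<omega> (\<tau> (Suc j)) - B1 \<omega> (\<tau> j) \<in> A (m - Suc j)"
              using h[rule_format, of "m - Suc j"] j unfolding \<tau>_def by simp
          qed
        next
          assume h: "\<forall>j<m. B1 \<omega> (\<tau> (Suc j)) - B1 \<omega> (\<tau> j) \<in> A (m - Suc j)"
          show "\<forall>i<m. B1 \<omega> (- (ts ! i)) - B1 \<omega> (- (ts ! Suc i)) \<in> A i"
          proof (intro allI impI)
            fix i assume i: "i < m"
            have "m - Suc (m - Suc i) = i" "m - (m - Suc i) = Suc i" using i by simp_all
            then show "B1 \<omega> (- (ts ! i)) - B1 \<omega> (- (ts ! Suc i)) \<in> A i"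
              using h[rule_format, of "m - Suc i"] i unfolding \<tau>_def by simp
          qed
        qed
        then show ?thesis using r1 by auto
      qed
      also have "emeasure M \<dots> = (\<Prod>j<m. emeasure (density lborel (\<lambda>x. ennreal (normal_density 0 (s * sqrt (\<tau> (Suc j) - \<tau> j)) x))) (A (m - Suc j)))"
      proof (rule BM_prod[OF bm1 s m0])
        show "\<forall>j<m. \<tau> j < \<tau> (Suc j)"
        proof (intro allI impI)
          fix j assume j: "j < m"
          then have "m - Suc j < m - j" "m - j < n" using m by auto
          then have "ts ! (m - Suc j) < ts ! (m - j)" by (rule lt)
          then show "\<tau> j < \<tau> (Suc j)" unfolding \<tau>_def by simp
        qed
        show "\<forall>j\<le>m. \<tau> j \<in> {0..1}"
        proof (intro allI impI)
          fix j assume j: "j \<le> m"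
          then have "m - j \<le> m" "m - j < n" using m by auto
          then show "\<tau> j \<in> {0..1}" using inr[of "m - j"] neg[of "m - j"] unfolding \<tau>_def by auto
        qed
        show "\<And>j. j < m \<Longrightarrow> A (m - Suc j) \<in> sets borel" using A mn by (auto simp: I_def)
      qed
      also have "\<dots> = (\<Prod>j<m. G A (m - Suc j))"
      proof (intro prod.cong refl)
        fix j assume j: "j \<in> {..<m}"
        then have "\<tau> (Suc j) - \<tau> j = ts ! Suc (m - Suc j) - ts ! (m - Suc j)"
          unfolding \<tau>_def by (simp add: Suc_diff_Suc)
        then show "emeasure (density lborel (\<lambda>x. ennreal (normal_density 0 (s * sqrt (\<tau> (Suc j) - \<tau> j)) x))) (A (m - Suc j)) = G A (m - Suc j)"
          unfolding G_def NM_def by simp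
      qed
      also have "\<dots> = (\<Prod>i<m. G A i)" by (rule prod.nat_diff_reindex)
      finally show ?thesis .
    qed
    also have "emeasure M {\<omega>\<in>space M. ?R2 \<omega> \<in> C2} = (\<Prod>j<n - 1 - m. G A (m + j))"
    proof -
      define \<tau> where "\<tau> j = ts ! (m + j)" for j
      define K where "K = n - 1 - m"
      have "{\<omega>\<in>space M. ?R2 \<omega> \<in> C2} = {\<omega>\<in>space M. \<forall>j<K. B2 \<omega> (\<tau> (Suc j)) - B2 \<omega> (\<tau> j) \<in> A (m + j)}"
      proof -
        have "(\<forall>i\<in>{m..<n-1}. B2 \<omega> (ts ! Suc i) - B2 \<omega> (ts ! i) \<in> A i) \<longleftrightarrow>
              (\<forall>j<K. B2 \<omega> (\<tau> (Suc j)) - B2 \<omega> (\<tau> j) \<in> A (m + j))" for \<omega>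
        proof
          assume h: "\<forall>i\<in>{m..<n-1}. B2 \<omega> (ts ! Suc i) - B2 \<omega> (ts ! i) \<in> A i"
          show "\<forall>j<K. B2 \<omega> (\<tau> (Suc j)) - B2 \<omega> (\<tau> j) \<in> A (m + j)"
            using h unfolding \<tau>_def K_def by auto
        next
          assume h: "\<forall>j<K. B2 \<omega> (\<tau> (Suc j)) - B2 \<omega> (\<tau> j) \<in> A (m + j)"
          show "\<forall>i\<in>{m..<n-1}. B2 \<omega> (ts ! Suc i) - B2 \<omega> (ts ! i) \<in> A i"
          proof
            fix i assume i: "i \<in> {m..<n-1}"
            then have "i - m < K" "m + (i - m) = i" "Suc (m + (i - m)) = Suc i" unfolding K_def by auto
            then show "B2 \<omega> (ts ! Suc i) - B2 \<omega> (ts ! i) \<in> A i"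
              using h[rule_format, of "i - m"] unfolding \<tau>_def by simp
          qed
        qed
        then show ?thesis using r2 by auto
      qed
      also have "emeasure M \<dots> = (\<Prod>j<K. emeasure (density lborel (\<lambda>x. ennreal (normal_density 0 (s * sqrt (\<tau> (Suc j) - \<tau> j)) x))) (A (m + j)))"
      proof (rule BM_prod[OF bm2 s])
        show "0 < K" using mn by (simp add: K_def)
        show "\<forall>j<K. \<tau> j < \<tau> (Suc j)"
        proof (intro allI impI)
          fix j assume j: "j < K"
          then have "m + j < m + Suc j" "m + Suc j < n" using mn by (auto simp: K_def)
          then have "ts ! (m + j) < ts ! (m + Suc j)" by (rule lt)
          then show "\<tau> j < \<tau> (Suc j)" unfolding \<tau>_def by simp
        qed
        show "\<forall>j\<le>K. \<tau> j \<in> {0..1}"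
        proof (intro allI impI)
          fix j assume j: "j \<le> K"
          then have "m \<le> m + j" "m + j < n" using mn by (auto simp: K_def)
          then show "\<tau> j \<in> {0..1}" using inr[of "m + j"] pos[of "m + j"] unfolding \<tau>_def by auto
        qed
        show "\<And>j. j < K \<Longrightarrow> A (m + j) \<in> sets borel" using A by (auto simp: I_def K_def)
      qed
      also have "\<dots> = (\<Prod>j<K. G A (m + j))"
        unfolding G_def NM_def \<tau>_def by simp
      finally show ?thesis unfolding K_def .
    qed
    also have "(\<Prod>i<m. G A i) * (\<Prod>j<n - 1 - m. G A (m + j)) = (\<Prod>i\<in>I. G A i)"
    proof -
      have u: "I = {..<m} \<union> (\<lambda>j. m + j) ` {..<n - 1 - m}"
      proof (intro set_eqI iffI)
        fix x assume "x \<in> I"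
        then have x: "x < n - 1" by (simp add: I_def)
        show "x \<in> {..<m} \<union> (\<lambda>j. m + j) ` {..<n - 1 - m}"
        proof (cases "x < m")
          case False
          then have "x = m + (x - m)" "x - m < n - 1 - m" using x by auto
          then show ?thesis by blast
        qed simp
      next
        fix x assume "x \<in> {..<m} \<union> (\<lambda>j. m + j) ` {..<n - 1 - m}"
        then show "x \<in> I" using mn unfolding I_def by auto
      qed
      have "(\<Prod>i\<in>I. G A i) = (\<Prod>i<m. G A i) * (\<Prod>i\<in>(\<lambda>j. m + j) ` {..<n - 1 - m}. G A i)"
        unfolding u by (rule prod.union_disjoint) auto
      also have "(\<Prod>i\<in>(\<lambda>j. m + j) ` {..<n - 1 - m}. G A i) = (\<Prod>j<n - 1 - m. G A (m + j))"
        by (rule prod.reindex_cong[where l="\<lambda>j. m + j"]) (auto simp: inj_on_def)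
      finally show ?thesis by simp
    qed
    also have "\<dots> = emeasure (PiM I (NM s ts)) (PiE I A)"
      using emeasure_PiM_NM[OF s sorted, of A] A unfolding G_def I_def n_def by simp
    finally show "emeasure (distr M (PiM I (\<lambda>_. borel)) (dvec ts ?V)) (PiE I A) = emeasure (PiM I (NM s ts)) (PiE I A)" .
  qed
qed

end


lemma null_indep1:
  fixes X Y :: "'a \<Rightarrow> ereal"
  assumes pM: "prob_space M" and ind: "prob_space.indep_var M borel X borel Y"
    and na: "\<And>c. emeasure M {\<omega>\<in>space M. Y \<omega> = c} = 0"
  shows "emeasure M {\<omega>\<in>space M. X \<omega> = Y \<omega>} = 0"
proof -
  interpret prob_space M by (rule pM)
  have rvX: "random_variable borel X" and rvY: "random_variable borel Y"
    and J: "distr M borel X \<Otimes>\<^sub>M distr M borel Y = distr M (borel \<Otimes>\<^sub>M borel) (\<lambda>x. (X x, Y x))"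
    using ind unfolding indep_var_distribution_eq by auto
  interpret DY: prob_space "distr M borel Y" by (rule prob_space_distr[OF rvY])
  define S where "S = {p \<in> space (borel \<Otimes>\<^sub>M borel :: (ereal \<times> ereal) measure). fst p = snd p}"
  have Ss: "S \<in> sets (borel \<Otimes>\<^sub>M borel)" unfolding S_def by measurable
  have pm: "(\<lambda>x. (X x, Y x)) \<in> measurable M (borel \<Otimes>\<^sub>M borel)" using rvX rvY by (rule measurable_Pair)
  have "emeasure M {\<omega>\<in>space M. X \<omega> = Y \<omega>} = emeasure M ((\<lambda>x. (X x, Y x)) -` S \<inter> space M)"
    by (intro arg_cong2[where f=emeasure]) (auto simp: S_def space_pair_measure)
  also have "\<dots> = emeasure (distr M (borel \<Otimes>\<^sub>M borel) (\<lambda>x. (X x, Y x))) S"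
    by (rule emeasure_distr[symmetric, OF pm Ss])
  also have "\<dots> = emeasure (distr M borel X \<Otimes>\<^sub>M distr M borel Y) S" unfolding J ..
  also have "\<dots> = (\<integral>\<^sup>+ a. emeasure (distr M borel Y) (Pair a -` S) \<partial>distr M borel X)"
    using Ss by (intro DY.emeasure_pair_measure_alt) auto
  also have "\<dots> = (\<integral>\<^sup>+ a. 0 \<partial>distr M borel X)"
  proof (intro nn_integral_cong)
    fix a :: ereal
    have sub: "Pair a -` S = {a}" by (auto simp: S_def space_pair_measure)
    have "emeasure (distr M borel Y) (Pair a -` S) = emeasure M (Y -` {a} \<inter> space M)"
      unfolding sub using rvY by (intro emeasure_distr) auto
    also have "\<dots> = 0" using na[of a] by (simp add: vimage_def Int_def conj_commute)
    finally show "emeasure (distr M borel Y) (Pair a -` S) = 0" .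
  qed
  finally show ?thesis by simp
qed

lemma null_indep2:
  fixes X Y :: "'a \<Rightarrow> ereal"
  assumes pM: "prob_space M" and ind: "prob_space.indep_var M borel Y borel X"
    and na: "\<And>c. emeasure M {\<omega>\<in>space M. Y \<omega> = c} = 0"
  shows "emeasure M {\<omega>\<in>space M. X \<omega> = Y \<omega>} = 0"
proof -
  interpret prob_space M by (rule pM)
  have rvX: "random_variable borel X" and rvY: "random_variable borel Y"
    and J: "distr M borel Y \<Otimes>\<^sub>M distr M borel X = distr M (borel \<Otimes>\<^sub>M borel) (\<lambda>x. (Y x, X x))"
    using ind unfolding indep_var_distribution_eq by auto
  interpret DY: prob_space "distr M borel Y" by (rule prob_space_distr[OF rvY])
  interpret DX: prob_space "distr M borel X" by (rule prob_space_distr[OF rvX])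
  interpret DP: pair_prob_space "distr M borel Y" "distr M borel X" ..
  define S where "S = {p \<in> space (borel \<Otimes>\<^sub>M borel :: (ereal \<times> ereal) measure). fst p = snd p}"
  have Ss: "S \<in> sets (borel \<Otimes>\<^sub>M borel)" unfolding S_def by measurable
  have pm: "(\<lambda>x. (Y x, X x)) \<in> measurable M (borel \<Otimes>\<^sub>M borel)" using rvY rvX by (rule measurable_Pair)
  have "emeasure M {\<omega>\<in>space M. X \<omega> = Y \<omega>} = emeasure M ((\<lambda>x. (Y x, X x)) -` S \<inter> space M)"
    by (intro arg_cong2[where f=emeasure]) (auto simp: S_def space_pair_measure)
  also have "\<dots> = emeasure (distr M (borel \<Otimes>\<^sub>M borel) (\<lambda>x. (Y x, X x))) S"
    by (rule emeasure_distr[symmetric, OF pm Ss])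
  also have "\<dots> = emeasure (distr M borel Y \<Otimes>\<^sub>M distr M borel X) S" unfolding J ..
  also have "\<dots> = (\<integral>\<^sup>+ a. emeasure (distr M borel Y) ((\<lambda>b. (b, a)) -` S) \<partial>distr M borel X)"
    using Ss by (intro DP.emeasure_pair_measure_alt2) auto
  also have "\<dots> = (\<integral>\<^sup>+ a. 0 \<partial>distr M borel X)"
  proof (intro nn_integral_cong)
    fix a :: ereal
    have sub: "(\<lambda>b. (b, a)) -` S = {a}" by (auto simp: S_def space_pair_measure)
    have "emeasure (distr M borel Y) ((\<lambda>b. (b, a)) -` S) = emeasure M (Y -` {a} \<inter> space M)"
      unfolding sub using rvY by (intro emeasure_distr) auto
    also have "\<dots> = 0" using na[of a] by (simp add: vimage_def Int_def conj_commute)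
    finally show "emeasure (distr M borel Y) ((\<lambda>b. (b, a)) -` S) = 0" .
  qed
  finally show ?thesis by simp
qed


lemma normal_singleton: "emeasure (density lborel (\<lambda>x. ennreal (normal_density \<mu> \<sigma> x))) {a} = 0"
proof -
  have ae: "AE x in lborel. x \<in> {a} \<longrightarrow> ennreal (normal_density \<mu> \<sigma> x) = 0"
    by (rule AE_mp[OF AE_lborel_singleton[of a]]) (rule AE_I2, auto)
  have "{a} \<in> null_sets (density lborel (\<lambda>x. ennreal (normal_density \<mu> \<sigma> x)))"
    using ae by (subst null_sets_density_iff) auto
  then show ?thesis by auto
qed

lemma na_B:
  assumes bm: "BM_on M s 0 1 B" and s: "s > 0" and z: "\<forall>\<omega>\<in>space M. B \<omega> 0 = 0"
  shows "emeasure M {\<omega>\<in>space M. B \<omega> 1 = r} = 0"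
proof -
  have "{\<omega>\<in>space M. B \<omega> 1 = r} = {\<omega>\<in>space M. \<forall>j<1. B \<omega> (real (Suc j)) - B \<omega> (real j) \<in> (\<lambda>_. {r}) j}"
    using z by auto
  also have "emeasure M \<dots> = (\<Prod>j<1. emeasure (density lborel (\<lambda>x. ennreal (normal_density 0 (s * sqrt (real (Suc j) - real j)) x))) {r})"
    by (rule BM_prod[OF bm s]) auto
  also have "\<dots> = 0" by (simp add: normal_singleton)
  finally show ?thesis .
qed

lemma Inf_neg_Sup: fixes g h :: "real \<Rightarrow> real"
  shows "Inf ((\<lambda>t. g t - h t) ` S) = - Sup ((\<lambda>t. h t - g t) ` (S::real set))"
proof -
  have "uminus ` ((\<lambda>t. g t - h t) ` S) = (\<lambda>t. h t - g t) ` S"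
    unfolding image_image by (intro image_cong refl) simp
  then show ?thesis unfolding Inf_real_def by simp
qed

definition g1 :: "(real \<Rightarrow> real) \<Rightarrow> (real \<Rightarrow> real) \<Rightarrow> ereal" where "g1 f x = (SUP q\<in>Qs 0 1. ereal (x q + f (-q)))"
definition g2 :: "(real \<Rightarrow> real) \<Rightarrow> (real \<Rightarrow> real) \<Rightarrow> ereal" where "g2 f x = ereal (f 1 - x 1)"
definition g3 :: "(real \<Rightarrow> real) \<Rightarrow> (real \<Rightarrow> real) \<Rightarrow> ereal" where "g3 f x = (SUP q\<in>Qs 0 1. ereal (f q - x q))"
definition g4 :: "(real \<Rightarrow> real) \<Rightarrow> (real \<Rightarrow> real) \<Rightarrow> ereal" where "g4 f x = ereal (f (-1) + x 1)"

context
  fixes M :: "'c measure" and s :: real and B1 B2 :: "'c \<Rightarrow> real \<Rightarrow> real" and f :: "real \<Rightarrow> real"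
  assumes s: "s > 0" and bm1: "BM_on M s 0 1 B1" and bm2: "BM_on M s 0 1 B2"
    and zero: "\<forall>\<omega>\<in>space M. B1 \<omega> 0 = 0 \<and> B2 \<omega> 0 = 0"
    and ind: "prob_space.indep_var M P01 (\<lambda>\<omega>. restrict (B1 \<omega>) {0..1}) P01 (\<lambda>\<omega>. restrict (B2 \<omega>) {0..1})"
    and fc: "continuous_on {-1..1} f" and f0: "f 0 = 0"
begin

lemma kkV_neg: "\<omega> \<in> space M \<Longrightarrow> u \<le> 0 \<Longrightarrow> kk f (VV B1 B2 \<omega>) u = B1 \<omega> (-u) + f u"
  using zero by (simp add: kk_def VV_def)

lemma kkV_pos: "\<omega> \<in> space M \<Longrightarrow> 0 \<le> u \<Longrightarrow> kk f (VV B1 B2 \<omega>) u = f u - B2 \<omega> u"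
  using zero by (cases "u = 0") (auto simp: kk_def VV_def f0)

lemma KV: "\<omega> \<in> space M \<Longrightarrow> Sup (kk f (VV B1 B2 \<omega>) ` {-1..0}) = Sup ((\<lambda>t. B1 \<omega> t + f (-t)) ` {0..1})"
proof -
  assume \<omega>: "\<omega> \<in> space M"
  have e: "{-1..0::real} = uminus ` {0..1}" by (simp add: image_uminus_atLeastAtMost)
  have "kk f (VV B1 B2 \<omega>) ` {-1..0} = kk f (VV B1 B2 \<omega>) ` (uminus ` {0..1})" by (subst e) (rule refl)
  also have "\<dots> = (\<lambda>t. kk f (VV B1 B2 \<omega>) (-t)) ` {0..1}" by (simp only: image_image)
  also have "\<dots> = (\<lambda>t. B1 \<omega> t + f (-t)) ` {0..1}"
    by (intro image_cong refl) (simp add: kkV_neg[OF \<omega>])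
  finally show ?thesis by simp
qed

lemma HV: "\<omega> \<in> space M \<Longrightarrow> Sup (kk f (VV B1 B2 \<omega>) ` {0..1}) = Sup ((\<lambda>t. f t - B2 \<omega> t) ` {0..1})"
  by (intro arg_cong[where f=Sup] image_cong refl) (simp add: kkV_pos)

lemma Zeq: "\<omega> \<in> space M \<Longrightarrow> Zval f (B1 \<omega>) (B2 \<omega>) = Sup (kk f (VV B1 B2 \<omega>) ` {-1..0}) - Sup (kk f (VV B1 B2 \<omega>) ` {0..1})"
  unfolding Zval_def KV HV Inf_neg_Sup by simp


lemma g_meas: "g1 f \<in> borel_measurable P01" "g2 f \<in> borel_measurable P01" "g3 f \<in> borel_measurable P01" "g4 f \<in> borel_measurable P01"
proof -
  have c: "q \<in> Qs 0 1 \<Longrightarrow> (\<lambda>x. x q) \<in> borel_measurable P01" for q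
    by (intro measurable_component_singleton) (auto simp: Qs_def)
  show "g1 f \<in> borel_measurable P01" unfolding g1_def
    by (rule borel_measurable_SUP[OF countable_Qs]) (intro borel_measurable_ereal borel_measurable_add c borel_measurable_const)
  show "g3 f \<in> borel_measurable P01" unfolding g3_def
    by (rule borel_measurable_SUP[OF countable_Qs]) (intro borel_measurable_ereal borel_measurable_diff c borel_measurable_const)
  have c1: "(\<lambda>x. x 1) \<in> borel_measurable P01" by (intro measurable_component_singleton) auto
  show "g2 f \<in> borel_measurable P01" unfolding g2_def
    by (intro borel_measurable_ereal borel_measurable_diff c1 borel_measurable_const)
  show "g4 f \<in> borel_measurable P01" unfolding g4_def
    by (intro borel_measurable_ereal borel_measurable_add c1 borel_measurable_const)
qed

lemma B_cont: "\<omega> \<in> space M \<Longrightarrow> continuous_on {0..1} (B1 \<omega>) \<and> continuous_on {0..1} (B2 \<omega>)"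
  using bm1 bm2 by (auto simp: BM_on_def)

lemma g1R: "\<omega> \<in> space M \<Longrightarrow> g1 f (restrict (B1 \<omega>) {0..1}) = ereal (Sup ((\<lambda>t. B1 \<omega> t + f (-t)) ` {0..1}))"
proof -
  assume \<omega>: "\<omega> \<in> space M"
  have "g1 f (restrict (B1 \<omega>) {0..1}) = (SUP q\<in>Qs 0 1. ereal (B1 \<omega> q + f (-q)))"
    unfolding g1_def by (intro SUP_cong refl) (auto simp: Qs_def)
  also have "\<dots> = ereal (Sup ((\<lambda>t. B1 \<omega> t + f (-t)) ` {0..1}))"
    using B_cont[OF \<omega>]
    by (intro sup_rat continuous_intros continuous_on_compose2[OF fc]) auto
  finally show ?thesis .
qed

lemma g3R: "\<omega> \<in> space M \<Longrightarrow> g3 f (restrict (B2 \<omega>) {0..1}) = ereal (Sup ((\<lambda>t. f t - B2 \<omega> t) ` {0..1}))"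
proof -
  assume \<omega>: "\<omega> \<in> space M"
  have "g3 f (restrict (B2 \<omega>) {0..1}) = (SUP q\<in>Qs 0 1. ereal (f q - B2 \<omega> q))"
    unfolding g3_def by (intro SUP_cong refl) (auto simp: Qs_def)
  also have "\<dots> = ereal (Sup ((\<lambda>t. f t - B2 \<omega> t) ` {0..1}))"
    using B_cont[OF \<omega>]
    by (intro sup_rat continuous_intros continuous_on_subset[OF fc]) auto
  finally show ?thesis .
qed

end


theorem mainTheorem13:
  fixes f :: "real \<Rightarrow> real" and s :: real
    and M1 :: "'a measure" and Wm :: "'a \<Rightarrow> real \<Rightarrow> real"
    and M2 :: "'b measure" and Wp :: "'b \<Rightarrow> real \<Rightarrow> real"
    and M3 :: "'c measure" and B1 B2 :: "'c \<Rightarrow> real \<Rightarrow> real"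
  assumes "continuous_on {-1..1} f" and "f 0 = 0" and "s > 0"
    and "BM_on M1 s (-1) 1 Wm"
    and "BM_on M2 s (-1) 1 Wp"
    and "BM_on M3 s 0 1 B1" and "BM_on M3 s 0 1 B2"
    and "\<forall>\<omega>\<in>space M3. B1 \<omega> 0 = 0 \<and> B2 \<omega> 0 = 0"
    and "prob_space.indep_var M3
           (PiM {0..1} (\<lambda>_. borel)) (\<lambda>\<omega>. restrict (B1 \<omega>) {0..1})
           (PiM {0..1} (\<lambda>_. borel)) (\<lambda>\<omega>. restrict (B2 \<omega>) {0..1})"
  shows "p_minus M1 f Wm + p_plus M2 f Wp \<ge> 1 \<and>
         (p_minus M1 f Wm + p_plus M2 f Wp = 1 \<longleftrightarrow>
            measure M3 {\<omega> \<in> space M3. Zval f (B1 \<omega>) (B2 \<omega>) = 0} = 0)"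
proof -
  note fc = assms(1) and f0 = assms(2) and s = assms(3) and bmA = assms(4) and bmB = assms(5)
    and bm1 = assms(6) and bm2 = assms(7) and zero = assms(8) and ind = assms(9)
  define V where "V = VV B1 B2"
  define \<Phi>1 where "\<Phi>1 \<omega> = Phi (Wm \<omega>) (Wm \<omega> (-1))" for \<omega>
  define \<Phi>2 where "\<Phi>2 \<omega> = Phi (Wp \<omega>) (Wp \<omega> (-1))" for \<omega>
  define \<Phi>3 where "\<Phi>3 \<omega> = Phi (V \<omega>) (V \<omega> (-1))" for \<omega>
  have fd1: "FD M1 s Wm" by (rule BM_FD[OF bmA])
  have fd2: "FD M2 s Wp" by (rule BM_FD[OF bmB])
  have fd3: "FD M3 s V" unfolding V_def by (rule FD_V[OF s bm1 bm2 zero ind])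
  have law1: "distr M1 PS \<Phi>1 = distr M3 PS \<Phi>3" unfolding \<Phi>1_def \<Phi>3_def by (rule Law[OF fd1 fd3])
  have law2: "distr M2 PS \<Phi>2 = distr M3 PS \<Phi>3" unfolding \<Phi>2_def \<Phi>3_def by (rule Law[OF fd2 fd3])
  have m1: "\<Phi>1 \<in> measurable M1 PS" unfolding \<Phi>1_def by (rule Phi_meas[OF fd1])
  have m2: "\<Phi>2 \<in> measurable M2 PS" unfolding \<Phi>2_def by (rule Phi_meas[OF fd2])
  have m3: "\<Phi>3 \<in> measurable M3 PS" unfolding \<Phi>3_def by (rule Phi_meas[OF fd3])
  interpret p3: prob_space M3 by (rule pM[OF s bm1 bm2 zero ind])
  have wc1: "\<omega> \<in> space M1 \<Longrightarrow> continuous_on {-1..1} (Wm \<omega>)" for \<omega> using bmA by (simp add: BM_on_def)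
  have wc2: "\<omega> \<in> space M2 \<Longrightarrow> continuous_on {-1..1} (Wp \<omega>)" for \<omega> using bmB by (simp add: BM_on_def)
  have wc3: "\<omega> \<in> space M3 \<Longrightarrow> continuous_on {-1..1} (V \<omega>)" for \<omega>
    unfolding V_def by (rule V_cont[OF s bm1 bm2 zero ind])
  define Am where "Am = \<Phi>3 -` Gm f \<inter> space M3"
  define Ap where "Ap = \<Phi>3 -` Gp f \<inter> space M3"
  define T where "T = \<Phi>3 -` TT f \<inter> space M3"
  define n1 where "n1 = \<Phi>3 -` N1 f \<inter> space M3"
  define n2 where "n2 = \<Phi>3 -` N2 f \<inter> space M3"
  have Ams: "Am \<in> sets M3" unfolding Am_def by (rule measurable_sets[OF m3 sets_Gm])
  have Aps: "Ap \<in> sets M3" unfolding Ap_def by (rule measurable_sets[OF m3 sets_Gp])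
  have Ts: "T \<in> sets M3" unfolding T_def by (rule measurable_sets[OF m3 sets_TT])
  have n1s: "n1 \<in> sets M3" unfolding n1_def by (rule measurable_sets[OF m3 sets_N1])
  have n2s: "n2 \<in> sets M3" unfolding n2_def by (rule measurable_sets[OF m3 sets_N2])
  have pm: "p_minus M1 f Wm = measure M3 Am"
  proof -
    have "{\<omega> \<in> space M1. sigma_minus f (Wm \<omega>) < 1} = \<Phi>1 -` Gm f \<inter> space M1"
      unfolding \<Phi>1_def using Gm_iff[OF fc wc1 f0] by auto
    then have "p_minus M1 f Wm = measure M1 (\<Phi>1 -` Gm f \<inter> space M1)" by (simp add: p_minus_def)
    also have "\<dots> = measure (distr M1 PS \<Phi>1) (Gm f)" by (rule measure_distr[symmetric, OF m1 sets_Gm])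
    also have "\<dots> = measure M3 Am" unfolding law1 Am_def by (rule measure_distr[OF m3 sets_Gm])
    finally show ?thesis .
  qed
  have pp: "p_plus M2 f Wp = measure M3 Ap"
  proof -
    have "{\<omega> \<in> space M2. sigma_plus f (Wp \<omega>) > -1} = \<Phi>2 -` Gp f \<inter> space M2"
      unfolding \<Phi>2_def using Gp_iff[OF fc wc2 f0] by auto
    then have "p_plus M2 f Wp = measure M2 (\<Phi>2 -` Gp f \<inter> space M2)" by (simp add: p_plus_def)
    also have "\<dots> = measure (distr M2 PS \<Phi>2) (Gp f)" by (rule measure_distr[symmetric, OF m2 sets_Gp])
    also have "\<dots> = measure M3 Ap" unfolding law2 Ap_def by (rule measure_distr[OF m3 sets_Gp])
    finally show ?thesis .
  qed
  have Zset: "{\<omega> \<in> space M3. Zval f (B1 \<omega>) (B2 \<omega>) = 0} = T"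
  proof -
    have "Zval f (B1 \<omega>) (B2 \<omega>) = 0 \<longleftrightarrow> \<Phi>3 \<omega> \<in> TT f" if "\<omega> \<in> space M3" for \<omega>
      using TT_iff[OF fc wc3[OF that] f0, of "V \<omega> (-1)"] Zeq[OF s bm1 bm2 zero ind fc f0 that]
      unfolding \<Phi>3_def V_def by simp
    then show ?thesis unfolding T_def by auto
  qed
  let ?R1 = "\<lambda>\<omega>. restrict (B1 \<omega>) {0..1}" and ?R2 = "\<lambda>\<omega>. restrict (B2 \<omega>) {0..1}"
  note gm = g_meas[OF s bm1 bm2 zero ind fc f0]
  have na1: "emeasure M3 {\<omega>\<in>space M3. (g2 f \<circ> ?R2) \<omega> = c} = 0" for c
  proof (cases c)
    case (real r)
    have "{\<omega>\<in>space M3. (g2 f \<circ> ?R2) \<omega> = c} = {\<omega>\<in>space M3. B2 \<omega> 1 = f 1 - r}"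
      using real by (auto simp: g2_def)
    then show ?thesis using na_B[OF bm2 s] zero by simp
  qed (auto simp: g2_def)
  have na2: "emeasure M3 {\<omega>\<in>space M3. (g4 f \<circ> ?R1) \<omega> = c} = 0" for c
  proof (cases c)
    case (real r)
    have "{\<omega>\<in>space M3. (g4 f \<circ> ?R1) \<omega> = c} = {\<omega>\<in>space M3. B1 \<omega> 1 = r - f (-1)}"
      using real by (auto simp: g4_def)
    then show ?thesis using na_B[OF bm1 s] zero by simp
  qed (auto simp: g4_def)
  have null1: "emeasure M3 {\<omega>\<in>space M3. (g1 f \<circ> ?R1) \<omega> = (g2 f \<circ> ?R2) \<omega>} = 0"
    by (rule null_indep1[OF p3.prob_space_axioms p3.indep_var_compose[OF ind gm(1) gm(2)] na1])
  have null2: "emeasure M3 {\<omega>\<in>space M3. (g3 f \<circ> ?R2) \<omega> = (g4 f \<circ> ?R1) \<omega>} = 0"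
    by (rule null_indep2[OF p3.prob_space_axioms p3.indep_var_compose[OF ind gm(4) gm(3)] na2])
  have n1sub: "n1 \<subseteq> {\<omega>\<in>space M3. (g1 f \<circ> ?R1) \<omega> = (g2 f \<circ> ?R2) \<omega>}"
  proof
    fix \<omega> assume "\<omega> \<in> n1"
    then have \<omega>: "\<omega> \<in> space M3" and h: "\<Phi>3 \<omega> \<in> N1 f" by (auto simp: n1_def)
    have "Sup (kk f (V \<omega>) ` {-1..0}) = kk f (V \<omega>) 1"
      using h N1_iff[OF fc wc3[OF \<omega>] f0, of "V \<omega> (-1)"] unfolding \<Phi>3_def by simp
    then have "Sup ((\<lambda>t. B1 \<omega> t + f (-t)) ` {0..1}) = f 1 - B2 \<omega> 1"
      using KV[OF s bm1 bm2 zero ind fc f0 \<omega>] kkV_pos[OF s bm1 bm2 zero ind fc f0 \<omega>, of 1]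
      unfolding V_def by simp
    then show "\<omega> \<in> {\<omega>\<in>space M3. (g1 f \<circ> ?R1) \<omega> = (g2 f \<circ> ?R2) \<omega>}"
      using \<omega> g1R[OF s bm1 bm2 zero ind fc f0 \<omega>] by (simp add: g2_def)
  qed
  have n2sub: "n2 \<subseteq> {\<omega>\<in>space M3. (g3 f \<circ> ?R2) \<omega> = (g4 f \<circ> ?R1) \<omega>}"
  proof
    fix \<omega> assume "\<omega> \<in> n2"
    then have \<omega>: "\<omega> \<in> space M3" and h: "\<Phi>3 \<omega> \<in> N2 f" by (auto simp: n2_def)
    have "Sup (kk f (V \<omega>) ` {0..1}) = kk f (V \<omega>) (-1)"
      using h N2_iff[OF fc wc3[OF \<omega>] f0, of "V \<omega> (-1)"] unfolding \<Phi>3_def by simp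
    then have "Sup ((\<lambda>t. f t - B2 \<omega> t) ` {0..1}) = f (-1) + B1 \<omega> 1"
      using HV[OF s bm1 bm2 zero ind fc f0 \<omega>] kkV_neg[OF s bm1 bm2 zero ind fc f0 \<omega>, of "-1"]
      unfolding V_def by simp
    then show "\<omega> \<in> {\<omega>\<in>space M3. (g3 f \<circ> ?R2) \<omega> = (g4 f \<circ> ?R1) \<omega>}"
      using \<omega> g3R[OF s bm1 bm2 zero ind fc f0 \<omega>] by (simp add: g4_def)
  qed
  have rv1: "?R1 \<in> measurable M3 P01" using p3.indep_var_rv1[OF ind] .
  have rv2: "?R2 \<in> measurable M3 P01" using p3.indep_var_rv2[OF ind] .
  have big1: "{\<omega>\<in>space M3. (g1 f \<circ> ?R1) \<omega> = (g2 f \<circ> ?R2) \<omega>} \<in> sets M3"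
    by (intro borel_measurable_eq measurable_comp[OF rv1 gm(1)] measurable_comp[OF rv2 gm(2)])
  have big2: "{\<omega>\<in>space M3. (g3 f \<circ> ?R2) \<omega> = (g4 f \<circ> ?R1) \<omega>} \<in> sets M3"
    by (intro borel_measurable_eq measurable_comp[OF rv1 gm(4)] measurable_comp[OF rv2 gm(3)])
  have mn1: "measure M3 n1 = 0"
  proof -
    have "emeasure M3 n1 \<le> 0" using emeasure_mono[OF n1sub big1] null1 by simp
    then show ?thesis by (simp add: measure_def)
  qed
  have mn2: "measure M3 n2 = 0"
  proof -
    have "emeasure M3 n2 \<le> 0" using emeasure_mono[OF n2sub big2] null2 by simp
    then show ?thesis by (simp add: measure_def)
  qed
  have rel_1: "space M3 - (Am \<union> Ap) \<subseteq> n1"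
  proof
    fix \<omega> assume "\<omega> \<in> space M3 - (Am \<union> Ap)"
    then have \<omega>: "\<omega> \<in> space M3" and h: "\<Phi>3 \<omega> \<notin> Gm f" "\<Phi>3 \<omega> \<notin> Gp f" by (auto simp: Am_def Ap_def)
    then have "\<Phi>3 \<omega> \<in> N1 f" unfolding \<Phi>3_def by (intro rel1[OF fc wc3[OF \<omega>] f0])
    then show "\<omega> \<in> n1" using \<omega> by (simp add: n1_def)
  qed
  have rel_2: "Am \<inter> Ap \<subseteq> T"
  proof
    fix \<omega> assume "\<omega> \<in> Am \<inter> Ap"
    then have \<omega>: "\<omega> \<in> space M3" and h: "\<Phi>3 \<omega> \<in> Gm f" "\<Phi>3 \<omega> \<in> Gp f" by (auto simp: Am_def Ap_def)
    then have "\<Phi>3 \<omega> \<in> TT f" unfolding \<Phi>3_def by (intro rel2[OF fc wc3[OF \<omega>] f0])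
    then show "\<omega> \<in> T" using \<omega> by (simp add: T_def)
  qed
  have rel_3: "T \<subseteq> (Am \<inter> Ap) \<union> n1 \<union> n2"
  proof
    fix \<omega> assume "\<omega> \<in> T"
    then have \<omega>: "\<omega> \<in> space M3" and h: "\<Phi>3 \<omega> \<in> TT f" by (auto simp: T_def)
    then have "(\<Phi>3 \<omega> \<in> Gm f \<and> \<Phi>3 \<omega> \<in> Gp f) \<or> \<Phi>3 \<omega> \<in> N1 f \<or> \<Phi>3 \<omega> \<in> N2 f"
      unfolding \<Phi>3_def by (intro rel3[OF fc wc3[OF \<omega>] f0])
    then show "\<omega> \<in> (Am \<inter> Ap) \<union> n1 \<union> n2" using \<omega> by (auto simp: Am_def Ap_def n1_def n2_def)
  qed
  have fm: "A \<in> sets M3 \<Longrightarrow> A \<in> fmeasurable M3" for A by (simp add: p3.fmeasurable_eq_sets)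
  have un: "measure M3 (Am \<union> Ap) = measure M3 Am + measure M3 Ap - measure M3 (Am \<inter> Ap)"
    by (rule measure_Un3[OF fm[OF Ams] fm[OF Aps]])
  have one: "measure M3 (Am \<union> Ap) = 1"
  proof -
    have "measure M3 (space M3 - (Am \<union> Ap)) \<le> measure M3 n1"
      using rel_1 n1s by (intro p3.finite_measure_mono) auto
    then have "measure M3 (space M3 - (Am \<union> Ap)) \<le> 0" using mn1 by simp
    moreover have "measure M3 (space M3 - (Am \<union> Ap)) = 1 - measure M3 (Am \<union> Ap)"
      using Ams Aps by (intro p3.prob_compl) auto
    moreover have "measure M3 (Am \<union> Ap) \<le> 1" by (rule p3.prob_le_1)
    ultimately show ?thesis by linarith
  qed
  have inter: "measure M3 (Am \<inter> Ap) = measure M3 T"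
  proof (rule antisym)
    show "measure M3 (Am \<inter> Ap) \<le> measure M3 T" using rel_2 Ts by (intro p3.finite_measure_mono)
    have s1: "measure M3 ((Am \<inter> Ap) \<union> n1) \<le> measure M3 (Am \<inter> Ap) + measure M3 n1"
      using measure_Un3[OF fm[of "Am \<inter> Ap"] fm[OF n1s]] Ams Aps by auto
    have s2: "measure M3 ((Am \<inter> Ap) \<union> n1 \<union> n2) \<le> measure M3 ((Am \<inter> Ap) \<union> n1) + measure M3 n2"
      using measure_Un3[OF fm[of "(Am \<inter> Ap) \<union> n1"] fm[OF n2s]] Ams Aps n1s by auto
    have "measure M3 T \<le> measure M3 ((Am \<inter> Ap) \<union> n1 \<union> n2)"
      using rel_3 Ams Aps n1s n2s by (intro p3.finite_measure_mono) auto
    then show "measure M3 T \<le> measure M3 (Am \<inter> Ap)" using s1 s2 mn1 mn2 by linarith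
  qed
  have sum: "p_minus M1 f Wm + p_plus M2 f Wp = 1 + measure M3 {\<omega> \<in> space M3. Zval f (B1 \<omega>) (B2 \<omega>) = 0}"
    unfolding pm pp Zset using un one inter by linarith
  show ?thesis unfolding sum by simp
qed

end
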